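(* In the two-stage mining game, fix all parameters except $\eta$ and consider $\eta$ large enough that $A(\beta^* )=A(0)=\{1,\dots,n\}$. Then, as $\eta\to\infty$, for each active miner $i\le n$, $$h_i^*(\beta^* )=h_i^*(0)+a_iI_i+a_{-i}\bar I_{-i}+O(\bar I^2),$$ where $$a_{-i}:=\frac{h_{i,0}}{c_0^{(n)}+2\gamma H_0}\Big(1-\frac{H_0^2}{R+\gamma H_0^2}\cdot\frac{\tilde c_i+2\gamma h_{i,0}}{h_{i,0}}\Big),\qquad a_i:=\frac{H_0^2}{R+\gamma H_0^2}+a_{-i},$$ and these satisfy $a_i>0$ and $a_{-i}<0\iff h_{i,0}/H_0<1/2$. Moreover, $$\frac{h_i^*(\beta^* )}{H^*(\beta^* )}=\frac{h_{i,0}}{H_0}+\alpha_0\big((1-\alpha_i)I_i-\alpha_i\bar I_{-i}\big)+O(\bar I^2),$$ where $\alpha_0:=\frac{H_0}{R+\gamma H_0^2}>0$ and $\alpha_i:=\frac{\tilde c_i+2\gamma h_{i,0}}{c_0^{(n)}+2\gamma H_0}\in(0,1)$; and the quantity $(1-\alpha_i)I_i-\alpha_i\bar I_{-i}$ is increasing in the initial cost $\tilde c_i$ of miner $i$ (i.e., across active miners, it is larger for miners with larger initial cost). Here $O(\bar I^2)$ denotes a remainder bounded in absolute value by $C\bar I^2$ for some constant $C$ and all sufficiently large $\eta$.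
   Context: Two-stage mining game: $N\ge2$ miners with initial costs-per-hash $0<\tilde c_1\le\dots\le\tilde c_N$; newest hardware cost $\tilde c_0\le\tilde c_1$; parameters $\eta\ge0$, $R>0$, $\gamma\ge0$, $K>0$. Stage 1: miner $i$ picks $\beta_i\in[0,1]$, giving cost $c_i(\beta_i)=\tilde c_i-\beta_i(\tilde c_i-\tilde c_0)+\frac{\eta(\tilde c_i-\tilde c_0)}{2}\beta_i^2$. Stage 2: given $\beta$, miners pick $h_i\ge0$, $H=\sum_jh_j$, payoff $\frac{h_i}{H}R-c_i(\beta_i)h_i-\frac{\gamma}{2}h_i^2-K\mathbf 1_{\{i\notin A(0),\beta_i>0\}}$ if $H>0$, else $0$; $h^*(\beta)$ is the unique stage-2 pure Nash equilibrium, $H^*(\beta)=\sum_jh^*_j(\beta)$, $A(\beta)=\{i:h_i^*(\beta)>0\}$. The equilibrium investment (subgame-perfect in $\beta$) is $\beta_i^*=\min\{1/\eta,1\}$ for active miners and $0$ otherwise. Notation: $H_0=H^*(0)$, $h_{i,0}=h_i^*(0)$, $c_0^{(n)}=\sum_{i=1}^n\tilde c_i$; the cost reduction of active miner $i$ is $I_i:=c_i(0)-c_i(\beta_i^* )$, which equals $(\tilde c_i-\tilde c_0)/(2\eta)$ for $\eta>1$; $\bar I=\sum_{i=1}^nI_i$ and $\bar I_{-i}=\bar I-I_i$. *)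

theory Defs
  imports Complex_Main
begin

text \<open>Costs are given by ct :: nat => real with
  ct 0 = newest hardware cost and ct i (1 <= i <= N) the initial cost of miner i.
  Strategy profiles and investment profiles are functions nat => real; only
  indices 1..N matter (hash-rate profiles are required to vanish elsewhere).\<close>

definition cost :: "(nat \<Rightarrow> real) \<Rightarrow> real \<Rightarrow> nat \<Rightarrow> real \<Rightarrow> real" where
  "cost ct \<eta> i b = ct i - b * (ct i - ct 0) + \<eta> * (ct i - ct 0) / 2 * b ^ 2"

definition totH :: "nat \<Rightarrow> (nat \<Rightarrow> real) \<Rightarrow> real" where
  "totH N h = (\<Sum>j\<in>{1..N}. h j)"

text \<open>Stage-2 payoff of miner i; A0 is the set of miners active at beta = 0
  (it only enters through the fixed cost K).\<close>
definition payoff :: "(nat \<Rightarrow> real) \<Rightarrow> real \<Rightarrow> real \<Rightarrow> real \<Rightarrow> real \<Rightarrow> nat \<Rightarrow> nat set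
    \<Rightarrow> (nat \<Rightarrow> real) \<Rightarrow> (nat \<Rightarrow> real) \<Rightarrow> nat \<Rightarrow> real" where
  "payoff ct \<eta> R \<gamma> K N A0 \<beta> h i =
     (if totH N h > 0 then
        h i / totH N h * R - cost ct \<eta> i (\<beta> i) * h i - \<gamma> / 2 * (h i)\<^sup>2
          - K * (if i \<notin> A0 \<and> \<beta> i > 0 then 1 else 0)
      else 0)"

definition is_NE :: "(nat \<Rightarrow> real) \<Rightarrow> real \<Rightarrow> real \<Rightarrow> real \<Rightarrow> real \<Rightarrow> nat \<Rightarrow> nat set
    \<Rightarrow> (nat \<Rightarrow> real) \<Rightarrow> (nat \<Rightarrow> real) \<Rightarrow> bool" where
  "is_NE ct \<eta> R \<gamma> K N A0 \<beta> h \<longleftrightarrow>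
     (\<forall>i. i \<notin> {1..N} \<longrightarrow> h i = 0) \<and>
     (\<forall>i\<in>{1..N}. 0 \<le> h i \<and>
        (\<forall>x\<ge>0. payoff ct \<eta> R \<gamma> K N A0 \<beta> (h(i := x)) i \<le> payoff ct \<eta> R \<gamma> K N A0 \<beta> h i))"

definition eqm :: "(nat \<Rightarrow> real) \<Rightarrow> real \<Rightarrow> real \<Rightarrow> real \<Rightarrow> real \<Rightarrow> nat \<Rightarrow> nat set
    \<Rightarrow> (nat \<Rightarrow> real) \<Rightarrow> (nat \<Rightarrow> real)" where
  "eqm ct \<eta> R \<gamma> K N A0 \<beta> = (THE h. is_NE ct \<eta> R \<gamma> K N A0 \<beta> h)"

text \<open>A(0): at beta = 0 the fixed-cost term vanishes, so A0 is irrelevant there.\<close>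
definition Azero :: "(nat \<Rightarrow> real) \<Rightarrow> real \<Rightarrow> real \<Rightarrow> real \<Rightarrow> real \<Rightarrow> nat \<Rightarrow> nat set" where
  "Azero ct \<eta> R \<gamma> K N = {i\<in>{1..N}. eqm ct \<eta> R \<gamma> K N {} (\<lambda>_. 0) i > 0}"

definition hstar :: "(nat \<Rightarrow> real) \<Rightarrow> real \<Rightarrow> real \<Rightarrow> real \<Rightarrow> real \<Rightarrow> nat
    \<Rightarrow> (nat \<Rightarrow> real) \<Rightarrow> (nat \<Rightarrow> real)" where
  "hstar ct \<eta> R \<gamma> K N \<beta> = eqm ct \<eta> R \<gamma> K N (Azero ct \<eta> R \<gamma> K N) \<beta>"

definition active :: "(nat \<Rightarrow> real) \<Rightarrow> real \<Rightarrow> real \<Rightarrow> real \<Rightarrow> real \<Rightarrow> nat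
    \<Rightarrow> (nat \<Rightarrow> real) \<Rightarrow> nat set" where
  "active ct \<eta> R \<gamma> K N \<beta> = {i\<in>{1..N}. hstar ct \<eta> R \<gamma> K N \<beta> i > 0}"

definition beta_star :: "real \<Rightarrow> nat \<Rightarrow> nat \<Rightarrow> real" where
  "beta_star \<eta> n i = (if 1 \<le> i \<and> i \<le> n then min (1 / \<eta>) 1 else 0)"

definition Ired :: "(nat \<Rightarrow> real) \<Rightarrow> real \<Rightarrow> nat \<Rightarrow> nat \<Rightarrow> real" where
  "Ired ct \<eta> n i = cost ct \<eta> i 0 - cost ct \<eta> i (beta_star \<eta> n i)"

end

theory Submission
  imports Defs
begin


definition pay :: "nat \<Rightarrow> real \<Rightarrow> real \<Rightarrow> (nat \<Rightarrow> real) \<Rightarrow> (nat \<Rightarrow> real) \<Rightarrow> nat \<Rightarrow> real" where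
  "pay N R \<gamma> c h i = (if totH N h > 0 then h i / totH N h * R - c i * h i - \<gamma> / 2 * (h i)\<^sup>2 else 0)"

definition NEc :: "nat \<Rightarrow> real \<Rightarrow> real \<Rightarrow> (nat \<Rightarrow> real) \<Rightarrow> (nat \<Rightarrow> real) \<Rightarrow> bool" where
  "NEc N R \<gamma> c h \<longleftrightarrow> (\<forall>i. i \<notin> {1..N} \<longrightarrow> h i = 0) \<and>
     (\<forall>i\<in>{1..N}. 0 \<le> h i \<and> (\<forall>x\<ge>0. pay N R \<gamma> c (h(i := x)) i \<le> pay N R \<gamma> c h i))"

lemma isNE_eq:
  assumes "\<forall>i\<in>{1..N}. \<not> (i \<notin> A0 \<and> \<beta> i > 0)"
  shows "is_NE ct \<eta> R \<gamma> K N A0 \<beta> h = NEc N R \<gamma> (\<lambda>i. cost ct \<eta> i (\<beta> i)) h"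
  using assms unfolding is_NE_def NEc_def payoff_def pay_def by auto

lemma totH_upd:
  assumes "i \<in> {1..N}"
  shows "totH N (h(i := x)) = totH N h - h i + x"
proof -
  have a: "totH N (h(i := x)) = (h(i:=x)) i + sum (h(i:=x)) ({1..N} - {i})"
    unfolding totH_def using assms by (rule_tac sum.remove) auto
  have b: "sum (h(i:=x)) ({1..N} - {i}) = sum h ({1..N} - {i})"
    by (rule sum.cong) auto
  have c: "totH N h = h i + sum h ({1..N} - {i})"
    unfolding totH_def using assms by (rule_tac sum.remove) auto
  show ?thesis using a b c by simp
qed

lemma foc_max:
  fixes R \<gamma> c S x y :: real
  assumes "S > 0" "y > 0" "x \<ge> 0" "R > 0" "\<gamma> \<ge> 0"
    and foc: "y * (R + \<gamma> * (y + S)\<^sup>2) = R * (y + S) - c * (y + S)\<^sup>2"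
  shows "x / (x + S) * R - c * x - \<gamma> / 2 * x\<^sup>2 \<le> y / (y + S) * R - c * y - \<gamma> / 2 * y\<^sup>2"
proof -
  have yS: "y + S > 0" "x + S > 0" using assms by auto
  have "c * (y + S)\<^sup>2 = R * S - \<gamma> * y * (y + S)\<^sup>2"
    using foc by (simp add: algebra_simps)
  then have c: "c = R * S / (y + S)\<^sup>2 - \<gamma> * y"
    using yS by (simp add: field_simps)
  have "(y / (y + S) * R - c * y - \<gamma> / 2 * y\<^sup>2) - (x / (x + S) * R - c * x - \<gamma> / 2 * x\<^sup>2)
      = (x - y)\<^sup>2 * (R * S / ((x + S) * (y + S)\<^sup>2) + \<gamma> / 2)"
  proof -
    have ne: "y + S \<noteq> 0" "x + S \<noteq> 0" "S*2+y*2 \<noteq> 0" "S*2+x*2 \<noteq> 0" using yS by auto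
    show ?thesis unfolding c
      apply (simp add: divide_simps ne)
      apply (simp add: algebra_simps power2_eq_square ne)
      done
  qed
  moreover have "(x - y)\<^sup>2 * (R * S / ((x + S) * (y + S)\<^sup>2) + \<gamma> / 2) \<ge> 0"
    using assms yS by (intro mult_nonneg_nonneg add_nonneg_nonneg) auto
  ultimately show ?thesis by linarith
qed

lemma zero_max:
  fixes R \<gamma> c S x :: real
  assumes "S > 0" "x \<ge> 0" "R > 0" "\<gamma> \<ge> 0" "R \<le> c * S"
  shows "x / (x + S) * R - c * x - \<gamma> / 2 * x\<^sup>2 \<le> 0"
proof -
  have "x / (x + S) * R \<le> x / S * R"
    using assms by (intro mult_right_mono divide_left_mono) auto
  also have "x / S * R \<le> c * x"
  proof -
    have "x * R \<le> x * (c * S)" using assms by (intro mult_left_mono) auto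
    then show ?thesis using assms by (simp add: field_simps)
  qed
  finally have "x / (x + S) * R \<le> c * x" .
  moreover have "0 \<le> \<gamma> / 2 * x\<^sup>2" using assms by simp
  ultimately show ?thesis by linarith
qed

lemma totH_nonneg_rest:
  assumes "\<forall>j\<in>{1..N}. 0 \<le> h j" "i \<in> {1..N}"
  shows "totH N h - h i \<ge> 0"
proof -
  have "totH N h = h i + sum h ({1..N} - {i})"
    unfolding totH_def using assms by (rule_tac sum.remove) auto
  moreover have "sum h ({1..N} - {i}) \<ge> 0" using assms by (intro sum_nonneg) auto
  ultimately show ?thesis by simp
qed

lemma pay_upd:
  assumes "i \<in> {1..N}" "totH N h - h i > 0" "x \<ge> 0"
  shows "pay N R \<gamma> c (h(i:=x)) i = x / (x + (totH N h - h i)) * R - c i * x - \<gamma> / 2 * x\<^sup>2"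
  using assms unfolding pay_def totH_upd[OF assms(1)] by (simp add: add.commute)

lemma pay_self:
  assumes "i \<in> {1..N}" "totH N h - h i > 0" "h i \<ge> 0"
  shows "pay N R \<gamma> c h i = h i / (h i + (totH N h - h i)) * R - c i * h i - \<gamma> / 2 * (h i)\<^sup>2"
  using pay_upd[OF assms, of R \<gamma> c] by simp

lemma NE_suff:
  assumes "R > 0" "\<gamma> \<ge> 0"
    and z: "\<forall>i. i \<notin> {1..N} \<longrightarrow> h i = 0"
    and nn: "\<forall>i\<in>{1..N}. 0 \<le> h i"
    and S: "\<forall>i\<in>{1..N}. totH N h - h i > 0"
    and act: "\<forall>i\<in>{1..N}. h i > 0 \<longrightarrow> h i * (R + \<gamma> * (totH N h)\<^sup>2) = R * totH N h - c i * (totH N h)\<^sup>2"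
    and inact: "\<forall>i\<in>{1..N}. h i = 0 \<longrightarrow> R \<le> c i * totH N h"
  shows "NEc N R \<gamma> c h"
  unfolding NEc_def
proof (intro conjI ballI allI impI)
  fix i assume "i \<notin> {1..N}" then show "h i = 0" using z by auto
next
  fix i assume i: "i \<in> {1..N}" then show "0 \<le> h i" using nn by auto
next
  fix i and x :: real assume i: "i \<in> {1..N}" and x: "0 \<le> x"
  define Si where "Si = totH N h - h i"
  have Sp: "Si > 0" using S i Si_def by auto
  have H: "totH N h = h i + Si" unfolding Si_def by simp
  have e1: "pay N R \<gamma> c (h(i:=x)) i = x / (x + Si) * R - c i * x - \<gamma> / 2 * x\<^sup>2"
    using pay_upd[OF i _ x] Sp Si_def by simp
  have e2: "pay N R \<gamma> c h i = h i / (h i + Si) * R - c i * h i - \<gamma> / 2 * (h i)\<^sup>2"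
    using pay_self[OF i] Sp Si_def nn i by simp
  show "pay N R \<gamma> c (h(i:=x)) i \<le> pay N R \<gamma> c h i"
  proof (cases "h i > 0")
    case True
    then show ?thesis unfolding e1 e2
      using foc_max[OF Sp True x assms(1,2), of "c i"] act i H by auto
  next
    case False
    then have "h i = 0" using nn i by force
    then show ?thesis unfolding e1 e2
      using zero_max[OF Sp x assms(1,2), of "c i"] inact i H by auto
  qed
qed

lemma small_pos:
  fixes R S c \<gamma> :: real
  assumes "S > 0" "R > c * S" "\<gamma> \<ge> 0"
  shows "\<exists>x>0. x / (x + S) * R - c * x - \<gamma> / 2 * x\<^sup>2 > 0"
proof -
  have "((\<lambda>x. R / (x + S) - c - \<gamma> / 2 * x) \<longlongrightarrow> R / (0 + S) - c - \<gamma> / 2 * 0) (at_right 0)"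
    using assms by (intro tendsto_intros) auto
  moreover have "R / (0 + S) - c - \<gamma> / 2 * 0 > 0" using assms by (simp add: field_simps)
  ultimately have "\<forall>\<^sub>F x in at_right 0. R / (x + S) - c - \<gamma> / 2 * x > 0"
    by (rule order_tendstoD)
  moreover have "\<forall>\<^sub>F x in at_right (0::real). x > 0" by (simp add: eventually_at_right_less)
  ultimately have "\<forall>\<^sub>F x in at_right (0::real). x > 0 \<and> R / (x + S) - c - \<gamma> / 2 * x > 0"
    by eventually_elim auto
  then obtain x where x: "x > 0" "R / (x + S) - c - \<gamma> / 2 * x > 0"
    using eventually_happens[of _ "at_right (0::real)"] by (auto simp: trivial_limit_at_right_real)
  have "x / (x + S) * R - c * x - \<gamma> / 2 * x\<^sup>2 = x * (R / (x + S) - c - \<gamma> / 2 * x)"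
    by (simp add: algebra_simps power2_eq_square)
  also have "\<dots> > 0" using x by simp
  finally show ?thesis using x by blast
qed

lemma NE_nec:
  assumes NE: "NEc N R \<gamma> c h" and R: "R > 0" and g: "\<gamma> \<ge> 0"
    and cpos: "\<forall>i\<in>{1..N}. c i > 0" and i: "i \<in> {1..N}"
  shows "totH N h - h i > 0"
    and "h i > 0 \<Longrightarrow> h i * (R + \<gamma> * (totH N h)\<^sup>2) = R * totH N h - c i * (totH N h)\<^sup>2"
    and "h i = 0 \<Longrightarrow> R \<le> c i * totH N h"
proof -
  have nn: "\<forall>j\<in>{1..N}. 0 \<le> h j" and z: "\<forall>j. j \<notin> {1..N} \<longrightarrow> h j = 0"
    and ne: "\<And>x. x \<ge> 0 \<Longrightarrow> pay N R \<gamma> c (h(i:=x)) i \<le> pay N R \<gamma> c h i"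
    using NE i unfolding NEc_def by auto
  have ci: "c i > 0" using cpos i by auto
  show Sp: "totH N h - h i > 0"
  proof (rule ccontr)
    assume "\<not> ?thesis"
    then have S0: "totH N h - h i = 0" using totH_nonneg_rest[OF nn i] by linarith
    have upd: "\<And>x. x > 0 \<Longrightarrow> pay N R \<gamma> c (h(i:=x)) i = R - c i * x - \<gamma> / 2 * x\<^sup>2"
      unfolding pay_def totH_upd[OF i] using S0 by simp
    show False
    proof (cases "h i > 0")
      case True
      have "pay N R \<gamma> c h i = R - c i * h i - \<gamma> / 2 * (h i)\<^sup>2"
        using upd[OF True] by simp
      moreover have "pay N R \<gamma> c (h(i := h i / 2)) i = R - c i * (h i / 2) - \<gamma> / 2 * (h i / 2)\<^sup>2"
        using upd[of "h i / 2"] True by simp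
      moreover have "R - c i * (h i / 2) - \<gamma> / 2 * (h i / 2)\<^sup>2 > R - c i * h i - \<gamma> / 2 * (h i)\<^sup>2"
      proof -
        have "c i * (h i / 2) < c i * h i" using ci True by simp
        moreover have "\<gamma> / 2 * (h i / 2)\<^sup>2 \<le> \<gamma> / 2 * (h i)\<^sup>2"
          using g True by (intro mult_left_mono) (auto simp: power2_eq_square)
        ultimately show ?thesis by linarith
      qed
      ultimately show False using ne[of "h i / 2"] True by simp
    next
      case False
      then have hi0: "h i = 0" using nn i by force
      have "pay N R \<gamma> c h i = 0" unfolding pay_def using S0 hi0 by simp
      define x where "x = min 1 (R / (2 * (c i + \<gamma>)))"
      have xp: "x > 0" unfolding x_def using R ci g by simp
      have x1: "x \<le> 1" and x2: "x \<le> R / (2 * (c i + \<gamma>))" unfolding x_def by auto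
      have "x * (c i + \<gamma>) \<le> R / 2" using x2 ci g by (simp add: field_simps)
      moreover have "\<gamma> / 2 * x\<^sup>2 \<le> \<gamma> * x"
      proof -
        have "x * x \<le> x * 1" using x1 xp by (intro mult_left_mono) auto
        then have "\<gamma> * (x * x) \<le> \<gamma> * x" using g by (metis mult_left_mono mult.right_neutral)
        moreover have "\<gamma> * x \<ge> 0" using g xp by simp
        ultimately show ?thesis by (simp add: power2_eq_square)
      qed
      ultimately have "R - c i * x - \<gamma> / 2 * x\<^sup>2 > 0" using R by (simp add: algebra_simps)
      then show False using ne[of x] upd[OF xp] xp \<open>pay N R \<gamma> c h i = 0\<close> by simp
    qed
  qed
  define S where "S = totH N h - h i"
  have S: "S > 0" using Sp S_def by simp
  define g' where "g' = (\<lambda>x. x / (x + S) * R - c i * x - \<gamma> / 2 * x\<^sup>2)"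
  have gx: "\<And>x. x \<ge> 0 \<Longrightarrow> pay N R \<gamma> c (h(i:=x)) i = g' x"
    unfolding g'_def S_def using pay_upd[OF i Sp] by simp
  have gh: "pay N R \<gamma> c h i = g' (h i)"
    unfolding g'_def S_def using pay_self[OF i Sp] nn i by simp
  show "h i * (R + \<gamma> * (totH N h)\<^sup>2) = R * totH N h - c i * (totH N h)\<^sup>2" if hp: "h i > 0"
  proof -
    let ?y = "h i"
    have der: "DERIV g' ?y :> (S * R / ((?y + S) * (?y + S)) - c i - \<gamma> * ?y)"
    proof -
      have ne: "?y + S \<noteq> 0" "S + ?y \<noteq> 0" using hp S by auto
      show ?thesis unfolding g'_def
        by (rule derivative_eq_intros refl | simp add: ne)+
    qed
    have loc: "\<forall>z. \<bar>?y - z\<bar> < ?y \<longrightarrow> g' z \<le> g' ?y"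
    proof (intro allI impI)
      fix z assume "\<bar>?y - z\<bar> < ?y"
      then have "z \<ge> 0" by linarith
      then show "g' z \<le> g' ?y" using ne[of z] gx gh by simp
    qed
    have "S * R / ((?y + S) * (?y + S)) - c i - \<gamma> * ?y = 0"
      by (rule DERIV_local_max[OF der hp loc])
    then have "S * R / ((?y + S) * (?y + S)) = c i + \<gamma> * ?y" by (simp add: algebra_simps)
    moreover have "(?y + S) * (?y + S) \<noteq> 0" using hp S by simp
    ultimately have "S * R = (c i + \<gamma> * ?y) * ((?y + S) * (?y + S))" by (simp add: divide_eq_eq)
    then have "S * R = (c i + \<gamma> * ?y) * (?y + S)\<^sup>2" by (simp add: power2_eq_square)
    then show ?thesis unfolding S_def by (simp add: algebra_simps)
  qed
  show "R \<le> c i * totH N h" if h0: "h i = 0"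
  proof (rule ccontr)
    assume "\<not> ?thesis"
    then have "R > c i * S" unfolding S_def using h0 by simp
    then obtain x where x: "x > 0" "g' x > 0" using small_pos[OF S _ g] unfolding g'_def by blast
    have "g' 0 = 0" unfolding g'_def by simp
    then show False using ne[of x] gx[of x] gh h0 x by simp
  qed
qed

definition psi :: "real \<Rightarrow> real \<Rightarrow> real \<Rightarrow> real \<Rightarrow> real" where
  "psi R \<gamma> c H = max 0 (R - c * H) / (R + \<gamma> * H\<^sup>2)"

lemma psi_anti:
  assumes "R > 0" "\<gamma> \<ge> 0" "c > 0" "0 < H1" "H1 \<le> H2"
  shows "psi R \<gamma> c H2 \<le> psi R \<gamma> c H1"
proof -
  have d1: "R + \<gamma> * H1\<^sup>2 > 0" using assms by (simp add: add_pos_nonneg)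
  have "H1\<^sup>2 \<le> H2\<^sup>2" using assms by (simp add: power_mono)
  then have dd: "R + \<gamma> * H1\<^sup>2 \<le> R + \<gamma> * H2\<^sup>2" using assms by (simp add: mult_left_mono)
  have "c * H1 \<le> c * H2" using assms by (intro mult_left_mono) auto
  then have nn: "max 0 (R - c * H2) \<le> max 0 (R - c * H1)" by (auto simp: max_def)
  have "max 0 (R - c * H2) / (R + \<gamma> * H2\<^sup>2) \<le> max 0 (R - c * H2) / (R + \<gamma> * H1\<^sup>2)"
    using d1 dd by (intro divide_left_mono) auto
  also have "\<dots> \<le> max 0 (R - c * H1) / (R + \<gamma> * H1\<^sup>2)"
    using d1 nn by (intro divide_right_mono) auto
  finally show ?thesis unfolding psi_def .
qed

lemma psi_strict:
  assumes "R > 0" "\<gamma> \<ge> 0" "c > 0" "0 < H1" "H1 < H2" "psi R \<gamma> c H2 > 0"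
  shows "psi R \<gamma> c H2 < psi R \<gamma> c H1"
proof -
  have d1: "R + \<gamma> * H1\<^sup>2 > 0" using assms by (simp add: add_pos_nonneg)
  have "H1\<^sup>2 \<le> H2\<^sup>2" using assms by (simp add: power_mono)
  then have dd: "R + \<gamma> * H1\<^sup>2 \<le> R + \<gamma> * H2\<^sup>2" using assms by (simp add: mult_left_mono)
  have pos: "R - c * H2 > 0" using assms(6) d1 dd unfolding psi_def
    by (smt (verit, best) divide_nonpos_pos)
  have "c * H1 < c * H2" using assms by (intro mult_strict_left_mono) auto
  then have nn: "max 0 (R - c * H2) < max 0 (R - c * H1)" using pos by (auto simp: max_def)
  have "max 0 (R - c * H2) / (R + \<gamma> * H2\<^sup>2) \<le> max 0 (R - c * H2) / (R + \<gamma> * H1\<^sup>2)"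
    using d1 dd by (intro divide_left_mono) auto
  also have "\<dots> < max 0 (R - c * H1) / (R + \<gamma> * H1\<^sup>2)"
    using d1 nn by (intro divide_strict_right_mono) auto
  finally show ?thesis unfolding psi_def .
qed

lemma psi_lt1:
  assumes "R > 0" "\<gamma> \<ge> 0" "c > 0" "H > 0"
  shows "psi R \<gamma> c H < 1"
proof -
  have d: "R + \<gamma> * H\<^sup>2 > 0" using assms by (simp add: add_pos_nonneg)
  have "c * H > 0" "\<gamma> * H\<^sup>2 \<ge> 0" using assms by auto
  then have "max 0 (R - c * H) < R + \<gamma> * H\<^sup>2"
  proof (cases "R - c * H \<ge> 0")
    case True
    then have "max 0 (R - c * H) = R - c * H" by simp
    then show ?thesis using \<open>c * H > 0\<close> \<open>\<gamma> * H\<^sup>2 \<ge> 0\<close> by linarith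
  next
    case False
    then have "max 0 (R - c * H) = 0" by simp
    then show ?thesis using \<open>\<gamma> * H\<^sup>2 \<ge> 0\<close> assms(1) by linarith
  qed
  then show ?thesis unfolding psi_def using d by simp
qed

lemma NE_form:
  assumes NE: "NEc N R \<gamma> c h" and R: "R > 0" and g: "\<gamma> \<ge> 0" and N: "N \<ge> 1"
    and cpos: "\<forall>i\<in>{1..N}. c i > 0"
  shows "totH N h > 0" "\<forall>i\<in>{1..N}. h i = totH N h * psi R \<gamma> (c i) (totH N h)"
proof -
  have nn: "\<forall>j\<in>{1..N}. 0 \<le> h j" using NE unfolding NEc_def by auto
  have "1 \<in> {1..N}" using N by simp
  from NE_nec(1)[OF NE R g cpos this] nn N show Hp: "totH N h > 0" by force
  show "\<forall>i\<in>{1..N}. h i = totH N h * psi R \<gamma> (c i) (totH N h)"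
  proof
    fix i assume i: "i \<in> {1..N}"
    let ?H = "totH N h"
    have d: "R + \<gamma> * ?H\<^sup>2 > 0" using R g by (simp add: add_pos_nonneg)
    show "h i = ?H * psi R \<gamma> (c i) ?H"
    proof (cases "h i > 0")
      case True
      have e: "h i * (R + \<gamma> * ?H\<^sup>2) = ?H * (R - c i * ?H)"
        using NE_nec(2)[OF NE R g cpos i True] by (simp add: algebra_simps power2_eq_square)
      then have "?H * (R - c i * ?H) > 0" using True d by (metis mult_pos_pos)
      then have "R - c i * ?H > 0" using Hp by (simp add: zero_less_mult_iff)
      then have "psi R \<gamma> (c i) ?H = (R - c i * ?H) / (R + \<gamma> * ?H\<^sup>2)" unfolding psi_def by simp
      moreover have "h i = ?H * (R - c i * ?H) / (R + \<gamma> * ?H\<^sup>2)" using e d by (simp add: eq_divide_eq)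
      ultimately show ?thesis by simp
    next
      case False
      then have h0: "h i = 0" using nn i by force
      have "R \<le> c i * ?H" using NE_nec(3)[OF NE R g cpos i h0] .
      then have "psi R \<gamma> (c i) ?H = 0" unfolding psi_def by simp
      then show ?thesis using h0 by simp
    qed
  qed
qed

lemma psi_sum1:
  assumes NE: "NEc N R \<gamma> c h" and R: "R > 0" and g: "\<gamma> \<ge> 0" and N: "N \<ge> 1"
    and cpos: "\<forall>i\<in>{1..N}. c i > 0"
  shows "(\<Sum>i\<in>{1..N}. psi R \<gamma> (c i) (totH N h)) = 1"
proof -
  note f = NE_form[OF assms]
  define T where "T = totH N h"
  have "T = sum h {1..N}" unfolding T_def totH_def ..
  also have "\<dots> = (\<Sum>i\<in>{1..N}. T * psi R \<gamma> (c i) T)"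
  proof (rule sum.cong[OF refl])
    fix i assume "i \<in> {1..N}"
    then show "h i = T * psi R \<gamma> (c i) T" using f(2) unfolding T_def by blast
  qed
  also have "\<dots> = T * (\<Sum>i\<in>{1..N}. psi R \<gamma> (c i) T)"
    by (simp add: sum_distrib_left)
  finally show ?thesis using f(1) unfolding T_def[symmetric] by simp
qed

lemma NE_unique:
  assumes NE1: "NEc N R \<gamma> c h1" and NE2: "NEc N R \<gamma> c h2" and R: "R > 0" and g: "\<gamma> \<ge> 0" and N: "N \<ge> 1"
    and cpos: "\<forall>i\<in>{1..N}. c i > 0"
  shows "h1 = h2"
proof -
  have lt: False if A: "NEc N R \<gamma> c a" "NEc N R \<gamma> c b" "totH N a < totH N b" for a b
  proof -
    have sa: "(\<Sum>i\<in>{1..N}. psi R \<gamma> (c i) (totH N a)) = 1" using psi_sum1[OF A(1) R g N cpos] .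
    have sb: "(\<Sum>i\<in>{1..N}. psi R \<gamma> (c i) (totH N b)) = 1" using psi_sum1[OF A(2) R g N cpos] .
    have Ha: "totH N a > 0" using NE_form(1)[OF A(1) R g N cpos] .
    have "\<exists>i\<in>{1..N}. psi R \<gamma> (c i) (totH N b) > 0"
    proof (rule ccontr)
      assume nex: "\<not> (\<exists>i\<in>{1..N}. psi R \<gamma> (c i) (totH N b) > 0)"
      have "(\<Sum>i\<in>{1..N}. psi R \<gamma> (c i) (totH N b)) \<le> 0"
      proof (rule sum_nonpos)
        fix x assume "x \<in> {1..N}"
        then show "psi R \<gamma> (c x) (totH N b) \<le> 0" using nex by (simp add: not_less)
      qed
      then show False using sb by simp
    qed
    then obtain j where j: "j \<in> {1..N}" "psi R \<gamma> (c j) (totH N b) > 0" by blast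
    have "(\<Sum>i\<in>{1..N}. psi R \<gamma> (c i) (totH N b)) < (\<Sum>i\<in>{1..N}. psi R \<gamma> (c i) (totH N a))"
    proof (rule sum_strict_mono_ex1)
      show "\<forall>x\<in>{1..N}. psi R \<gamma> (c x) (totH N b) \<le> psi R \<gamma> (c x) (totH N a)"
      proof
        fix x assume "x \<in> {1..N}"
        then have "c x > 0" using cpos by blast
        then show "psi R \<gamma> (c x) (totH N b) \<le> psi R \<gamma> (c x) (totH N a)"
          using psi_anti[OF R g _ Ha] A(3) by simp
      qed
      have "c j > 0" using cpos j by blast
      then show "\<exists>k\<in>{1..N}. psi R \<gamma> (c k) (totH N b) < psi R \<gamma> (c k) (totH N a)"
        using psi_strict[OF R g _ Ha A(3) j(2)] j(1) by blast
    qed simp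
    then show False using sa sb by simp
  qed
  have HH: "totH N h1 = totH N h2"
    using lt[OF NE1 NE2] lt[OF NE2 NE1] by (meson linorder_neqE_linordered_idom)
  show ?thesis
  proof
    fix i
    show "h1 i = h2 i"
    proof (cases "i \<in> {1..N}")
      case True
      have e1: "h1 i = totH N h1 * psi R \<gamma> (c i) (totH N h1)" using NE_form(2)[OF NE1 R g N cpos] True by blast
      have e2: "h2 i = totH N h2 * psi R \<gamma> (c i) (totH N h2)" using NE_form(2)[OF NE2 R g N cpos] True by blast
      show ?thesis by (subst e1, subst e2, simp only: HH)
    next
      case False
      then show ?thesis using NE1 NE2 unfolding NEc_def by auto
    qed
  qed
qed


lemma psi_nonneg:
  assumes "R > 0" "\<gamma> \<ge> 0"
  shows "psi R \<gamma> c H \<ge> 0"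
  unfolding psi_def using assms by (intro divide_nonneg_pos) (auto simp: add_pos_nonneg)

lemma NE_exists:
  assumes N: "N \<ge> 2" and R: "R > 0" and g: "\<gamma> \<ge> 0" and cpos: "\<forall>i\<in>{1..N}. c i > 0"
  shows "\<exists>h. NEc N R \<gamma> c h"
proof -
  define M where "M = Max (c ` {1..N})"
  define m where "m = Min (c ` {1..N})"
  have ne: "c ` {1..N} \<noteq> {}" using N by auto
  have fin: "finite (c ` {1..N})" by simp
  have cM: "\<And>i. i \<in> {1..N} \<Longrightarrow> c i \<le> M" unfolding M_def using fin by (intro Max_ge) auto
  have cm: "\<And>i. i \<in> {1..N} \<Longrightarrow> m \<le> c i" unfolding m_def using fin by (intro Min_le) auto
  have mpos: "m > 0" unfolding m_def using Min_in[OF fin ne] cpos by auto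
  have one: "1 \<in> {1..N}" using N by simp
  have mM: "m \<le> M" using cm[OF one] cM[OF one] by simp
  define f where "f = (\<lambda>H. \<Sum>i\<in>{1..N}. psi R \<gamma> (c i) H)"
  define a where "a = min 1 (R / (2 * (M + \<gamma>)))"
  define b where "b = R / m"
  have Mg: "M + \<gamma> > 0" using mpos mM g by linarith
  have ap: "a > 0" unfolding a_def using R Mg by simp
  have a1: "a \<le> 1" unfolding a_def by simp
  have a2: "a \<le> R / (2 * (M + \<gamma>))" unfolding a_def by simp
  have aR: "2 * (M + \<gamma>) * a \<le> R" using a2 Mg by (simp add: field_simps)
  have aa: "a\<^sup>2 \<le> a" using a1 ap by (simp add: power2_eq_square mult_left_le_one_le)
  have half: "psi R \<gamma> (c i) a \<ge> 1 / 2" if i: "i \<in> {1..N}" for i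
  proof -
    have "c i * a \<le> M * a" using cM[OF i] ap by (simp add: mult_right_mono)
    moreover have "\<gamma> * a\<^sup>2 \<le> \<gamma> * a" using aa g by (simp add: mult_left_mono)
    moreover have "\<gamma> * a \<ge> 0" using g ap by simp
    moreover have "2 * (M + \<gamma>) * a = 2 * (M * a) + 2 * (\<gamma> * a)" by (simp add: algebra_simps)
    ultimately have key: "2 * c i * a + \<gamma> * a\<^sup>2 \<le> R" using aR by linarith
    have pos: "R - c i * a > 0"
    proof -
      have "\<gamma> * a\<^sup>2 \<ge> 0" using g by simp
      moreover have "c i * a > 0" using cpos i ap by simp
      ultimately show ?thesis using key by linarith
    qed
    have d: "R + \<gamma> * a\<^sup>2 > 0" using R g by (simp add: add_pos_nonneg)
    have "psi R \<gamma> (c i) a = (R - c i * a) / (R + \<gamma> * a\<^sup>2)" unfolding psi_def using pos by simp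
    moreover have "1 / 2 \<le> (R - c i * a) / (R + \<gamma> * a\<^sup>2)"
      using d key by (simp add: field_simps)
    ultimately show ?thesis by simp
  qed
  have fa: "f a \<ge> 1"
  proof -
    have "(\<Sum>i\<in>{1..N}. (1/2::real)) \<le> f a" unfolding f_def using half by (intro sum_mono) auto
    moreover have "(\<Sum>i\<in>{1..N}. (1/2::real)) = real N / 2" by simp
    moreover have "real N / 2 \<ge> 1" using N by simp
    ultimately show ?thesis by linarith
  qed
  have fb: "f b = 0"
    unfolding f_def
  proof (rule sum.neutral, rule ballI)
    fix i assume i: "i \<in> {1..N}"
    have "m * b = R" unfolding b_def using mpos by simp
    moreover have "m * b \<le> c i * b" using cm[OF i] mpos R unfolding b_def by (intro mult_right_mono) auto
    ultimately have "R - c i * b \<le> 0" by simp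
    then show "psi R \<gamma> (c i) b = 0" unfolding psi_def by simp
  qed
  have ab: "a \<le> b"
  proof -
    have "R / (2 * (M + \<gamma>)) \<le> R / m" using R mpos mM g by (intro divide_left_mono) auto
    then show ?thesis using a2 unfolding b_def by linarith
  qed
  have cont: "continuous_on {a..b} f"
  proof -
    have dnz: "\<And>x::real. R + \<gamma> * x\<^sup>2 \<noteq> 0"
    proof -
      fix x :: real
      have "\<gamma> * x\<^sup>2 \<ge> 0" using g by simp
      then show "R + \<gamma> * x\<^sup>2 \<noteq> 0" using R by linarith
    qed
    show ?thesis unfolding f_def psi_def
      apply (rule continuous_on_sum)
      apply (rule continuous_on_divide)
        apply (intro continuous_intros)
       apply (intro continuous_intros)
      apply (simp add: dnz)
      done
  qed
  have "\<exists>x. a \<le> x \<and> x \<le> b \<and> f x = 1"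
    by (rule IVT2'[OF _ fa ab cont]) (simp add: fb)
  then obtain H where H: "a \<le> H" "H \<le> b" "f H = 1" by blast
  have Hp: "H > 0" using H ap by simp
  define h where "h = (\<lambda>i. if i \<in> {1..N} then H * psi R \<gamma> (c i) H else 0)"
  have tot: "totH N h = H"
  proof -
    have "totH N h = (\<Sum>i\<in>{1..N}. H * psi R \<gamma> (c i) H)" unfolding totH_def h_def by simp
    also have "\<dots> = H * f H" unfolding f_def by (simp add: sum_distrib_left)
    finally show ?thesis using H by simp
  qed
  have d: "R + \<gamma> * H\<^sup>2 > 0" using R g by (simp add: add_pos_nonneg)
  have "NEc N R \<gamma> c h"
  proof (rule NE_suff[OF R g])
    show "\<forall>i. i \<notin> {1..N} \<longrightarrow> h i = 0" unfolding h_def by simp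
    show "\<forall>i\<in>{1..N}. 0 \<le> h i" unfolding h_def using psi_nonneg[OF R g] Hp by simp
    show "\<forall>i\<in>{1..N}. totH N h - h i > 0"
    proof
      fix i assume i: "i \<in> {1..N}"
      have "psi R \<gamma> (c i) H < 1" using psi_lt1[OF R g _ Hp] cpos i by simp
      then have "H * psi R \<gamma> (c i) H < H * 1" using Hp by (intro mult_strict_left_mono) auto
      then show "totH N h - h i > 0" unfolding tot using i unfolding h_def by simp
    qed
    show "\<forall>i\<in>{1..N}. h i > 0 \<longrightarrow> h i * (R + \<gamma> * (totH N h)\<^sup>2) = R * totH N h - c i * (totH N h)\<^sup>2"
    proof (intro ballI impI)
      fix i assume i: "i \<in> {1..N}" and hp: "h i > 0"
      then have "psi R \<gamma> (c i) H > 0" unfolding h_def using Hp by (simp add: zero_less_mult_iff)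
      then have "max 0 (R - c i * H) > 0" unfolding psi_def using d
        by (simp add: zero_less_divide_iff)
      then have "R - c i * H > 0" by simp
      then have "psi R \<gamma> (c i) H = (R - c i * H) / (R + \<gamma> * H\<^sup>2)" unfolding psi_def by simp
      then have "h i = H * (R - c i * H) / (R + \<gamma> * H\<^sup>2)" unfolding h_def using i by simp
      then have "h i * (R + \<gamma> * H\<^sup>2) = H * (R - c i * H)" using d by simp
      then show "h i * (R + \<gamma> * (totH N h)\<^sup>2) = R * totH N h - c i * (totH N h)\<^sup>2"
        unfolding tot by (simp add: algebra_simps power2_eq_square)
    qed
    show "\<forall>i\<in>{1..N}. h i = 0 \<longrightarrow> R \<le> c i * totH N h"
    proof (intro ballI impI)
      fix i assume i: "i \<in> {1..N}" and h0: "h i = 0"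
      then have "psi R \<gamma> (c i) H = 0" unfolding h_def using Hp by simp
      then have "max 0 (R - c i * H) = 0" unfolding psi_def using d by simp
      then show "R \<le> c i * totH N h" unfolding tot by simp
    qed
  qed
  then show ?thesis by blast
qed

lemma NE_ex1:
  assumes N: "N \<ge> 2" and R: "R > 0" and g: "\<gamma> \<ge> 0" and cpos: "\<forall>i\<in>{1..N}. c i > 0"
  shows "NEc N R \<gamma> c (THE h. NEc N R \<gamma> c h)"
proof -
  obtain h where h: "NEc N R \<gamma> c h" using NE_exists[OF assms] by blast
  have N1: "N \<ge> 1" using N by simp
  have u: "\<And>h'. NEc N R \<gamma> c h' \<Longrightarrow> h' = h" by (rule NE_unique[OF _ h R g N1 cpos])
  have "(THE h. NEc N R \<gamma> c h) = h" by (rule the_equality[of "NEc N R \<gamma> c" h, OF h u])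
  then show ?thesis using h by (simp only:)
qed


definition Bd :: "(real \<Rightarrow> real) \<Rightarrow> bool" where
  "Bd f \<longleftrightarrow> (\<exists>C. \<forall>\<^sub>F x in at_top. \<bar>f x\<bar> \<le> C)"
definition O1 :: "(real \<Rightarrow> real) \<Rightarrow> (real \<Rightarrow> real) \<Rightarrow> bool" where
  "O1 e f \<longleftrightarrow> (\<exists>C. \<forall>\<^sub>F x in at_top. \<bar>f x\<bar> \<le> C * e x)"
definition O2 :: "(real \<Rightarrow> real) \<Rightarrow> (real \<Rightarrow> real) \<Rightarrow> bool" where
  "O2 e f \<longleftrightarrow> (\<exists>C. \<forall>\<^sub>F x in at_top. \<bar>f x\<bar> \<le> C * (e x)\<^sup>2)"

lemma Bd_const: "Bd (\<lambda>_. c)"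
  unfolding Bd_def by (rule exI[of _ "\<bar>c\<bar>"]) simp

lemma Bd_add: "Bd f \<Longrightarrow> Bd g \<Longrightarrow> Bd (\<lambda>x. f x + g x)"
  unfolding Bd_def
proof (elim exE)
  fix C D assume "\<forall>\<^sub>F x in at_top. \<bar>f x\<bar> \<le> C" "\<forall>\<^sub>F x in at_top. \<bar>g x\<bar> \<le> D"
  then have "\<forall>\<^sub>F x in at_top. \<bar>f x + g x\<bar> \<le> C + D" by eventually_elim auto
  then show "\<exists>C. \<forall>\<^sub>F x in at_top. \<bar>f x + g x\<bar> \<le> C" by blast
qed

lemma Bd_diff: "Bd f \<Longrightarrow> Bd g \<Longrightarrow> Bd (\<lambda>x. f x - g x)"
  unfolding Bd_def
proof (elim exE)
  fix C D assume "\<forall>\<^sub>F x in at_top. \<bar>f x\<bar> \<le> C" "\<forall>\<^sub>F x in at_top. \<bar>g x\<bar> \<le> D"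
  then have "\<forall>\<^sub>F x in at_top. \<bar>f x - g x\<bar> \<le> C + D" by eventually_elim auto
  then show "\<exists>C. \<forall>\<^sub>F x in at_top. \<bar>f x - g x\<bar> \<le> C" by blast
qed

lemma Bd_mult: "Bd f \<Longrightarrow> Bd g \<Longrightarrow> Bd (\<lambda>x. f x * g x)"
  unfolding Bd_def
proof (elim exE)
  fix C D assume "\<forall>\<^sub>F x in at_top. \<bar>f x\<bar> \<le> C" "\<forall>\<^sub>F x in at_top. \<bar>g x\<bar> \<le> D"
  then have "\<forall>\<^sub>F x in at_top. \<bar>f x * g x\<bar> \<le> C * D"
    by eventually_elim (auto simp: abs_mult intro!: mult_mono)
  then show "\<exists>C. \<forall>\<^sub>F x in at_top. \<bar>f x * g x\<bar> \<le> C" by blast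
qed

lemma Bd_inv:
  assumes "m > 0" "\<forall>\<^sub>F x in at_top. g x \<ge> m"
  shows "Bd (\<lambda>x. 1 / g x)"
  unfolding Bd_def
proof (rule exI[of _ "1 / m"])
  show "\<forall>\<^sub>F x in at_top. \<bar>1 / g x\<bar> \<le> 1 / m"
    using assms(2) by eventually_elim (use assms(1) in \<open>auto simp: field_simps\<close>)
qed

lemma O1_add: "O1 e f \<Longrightarrow> O1 e g \<Longrightarrow> O1 e (\<lambda>x. f x + g x)"
  unfolding O1_def
proof (elim exE)
  fix C D assume "\<forall>\<^sub>F x in at_top. \<bar>f x\<bar> \<le> C * e x" "\<forall>\<^sub>F x in at_top. \<bar>g x\<bar> \<le> D * e x"
  then have "\<forall>\<^sub>F x in at_top. \<bar>f x + g x\<bar> \<le> (C + D) * e x" by eventually_elim (auto simp: algebra_simps)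
  then show "\<exists>C. \<forall>\<^sub>F x in at_top. \<bar>f x + g x\<bar> \<le> C * e x" by blast
qed

lemma O1_diff: "O1 e f \<Longrightarrow> O1 e g \<Longrightarrow> O1 e (\<lambda>x. f x - g x)"
  unfolding O1_def
proof (elim exE)
  fix C D assume "\<forall>\<^sub>F x in at_top. \<bar>f x\<bar> \<le> C * e x" "\<forall>\<^sub>F x in at_top. \<bar>g x\<bar> \<le> D * e x"
  then have "\<forall>\<^sub>F x in at_top. \<bar>f x - g x\<bar> \<le> (C + D) * e x" by eventually_elim (auto simp: algebra_simps)
  then show "\<exists>C. \<forall>\<^sub>F x in at_top. \<bar>f x - g x\<bar> \<le> C * e x" by blast
qed

lemma O2_add: "O2 e f \<Longrightarrow> O2 e g \<Longrightarrow> O2 e (\<lambda>x. f x + g x)"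
  unfolding O2_def
proof (elim exE)
  fix C D assume "\<forall>\<^sub>F x in at_top. \<bar>f x\<bar> \<le> C * (e x)\<^sup>2" "\<forall>\<^sub>F x in at_top. \<bar>g x\<bar> \<le> D * (e x)\<^sup>2"
  then have "\<forall>\<^sub>F x in at_top. \<bar>f x + g x\<bar> \<le> (C + D) * (e x)\<^sup>2" by eventually_elim (auto simp: algebra_simps)
  then show "\<exists>C. \<forall>\<^sub>F x in at_top. \<bar>f x + g x\<bar> \<le> C * (e x)\<^sup>2" by blast
qed

lemma O2_diff: "O2 e f \<Longrightarrow> O2 e g \<Longrightarrow> O2 e (\<lambda>x. f x - g x)"
  unfolding O2_def
proof (elim exE)
  fix C D assume "\<forall>\<^sub>F x in at_top. \<bar>f x\<bar> \<le> C * (e x)\<^sup>2" "\<forall>\<^sub>F x in at_top. \<bar>g x\<bar> \<le> D * (e x)\<^sup>2"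
  then have "\<forall>\<^sub>F x in at_top. \<bar>f x - g x\<bar> \<le> (C + D) * (e x)\<^sup>2" by eventually_elim (auto simp: algebra_simps)
  then show "\<exists>C. \<forall>\<^sub>F x in at_top. \<bar>f x - g x\<bar> \<le> C * (e x)\<^sup>2" by blast
qed

lemma O11: "O1 e f \<Longrightarrow> O1 e g \<Longrightarrow> O2 e (\<lambda>x. f x * g x)"
  unfolding O1_def O2_def
proof (elim exE)
  fix C D assume "\<forall>\<^sub>F x in at_top. \<bar>f x\<bar> \<le> C * e x" "\<forall>\<^sub>F x in at_top. \<bar>g x\<bar> \<le> D * e x"
  then have "\<forall>\<^sub>F x in at_top. \<bar>f x * g x\<bar> \<le> (C * D) * (e x)\<^sup>2"
  proof eventually_elim
    case (elim x)
    have "\<bar>f x * g x\<bar> = \<bar>f x\<bar> * \<bar>g x\<bar>" by (simp add: abs_mult)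
    also have "\<dots> \<le> (C * e x) * (D * e x)" using elim by (intro mult_mono) auto
    finally show ?case by (simp add: power2_eq_square algebra_simps)
  qed
  then show "\<exists>C. \<forall>\<^sub>F x in at_top. \<bar>f x * g x\<bar> \<le> C * (e x)\<^sup>2" by blast
qed

lemma BO1: "Bd f \<Longrightarrow> O1 e g \<Longrightarrow> O1 e (\<lambda>x. f x * g x)"
  unfolding Bd_def O1_def
proof (elim exE)
  fix C D assume "\<forall>\<^sub>F x in at_top. \<bar>f x\<bar> \<le> C" "\<forall>\<^sub>F x in at_top. \<bar>g x\<bar> \<le> D * e x"
  then have "\<forall>\<^sub>F x in at_top. \<bar>f x * g x\<bar> \<le> (C * D) * e x"
  proof eventually_elim
    case (elim x)
    have "\<bar>f x * g x\<bar> = \<bar>f x\<bar> * \<bar>g x\<bar>" by (simp add: abs_mult)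
    also have "\<dots> \<le> C * (D * e x)" using elim by (intro mult_mono) auto
    finally show ?case by (simp add: algebra_simps)
  qed
  then show "\<exists>C. \<forall>\<^sub>F x in at_top. \<bar>f x * g x\<bar> \<le> C * e x" by blast
qed

lemma BO2: "Bd f \<Longrightarrow> O2 e g \<Longrightarrow> O2 e (\<lambda>x. f x * g x)"
  unfolding Bd_def O2_def
proof (elim exE)
  fix C D assume "\<forall>\<^sub>F x in at_top. \<bar>f x\<bar> \<le> C" "\<forall>\<^sub>F x in at_top. \<bar>g x\<bar> \<le> D * (e x)\<^sup>2"
  then have "\<forall>\<^sub>F x in at_top. \<bar>f x * g x\<bar> \<le> (C * D) * (e x)\<^sup>2"
  proof eventually_elim
    case (elim x)
    have "\<bar>f x * g x\<bar> = \<bar>f x\<bar> * \<bar>g x\<bar>" by (simp add: abs_mult)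
    also have "\<dots> \<le> C * (D * (e x)\<^sup>2)" using elim by (intro mult_mono) auto
    finally show ?case by (simp add: algebra_simps)
  qed
  then show "\<exists>C. \<forall>\<^sub>F x in at_top. \<bar>f x * g x\<bar> \<le> C * (e x)\<^sup>2" by blast
qed

lemma O1B: "O1 e g \<Longrightarrow> Bd f \<Longrightarrow> O1 e (\<lambda>x. g x * f x)"
  using BO1[of f e g] by (simp add: mult.commute)
lemma O2B: "O2 e g \<Longrightarrow> Bd f \<Longrightarrow> O2 e (\<lambda>x. g x * f x)"
  using BO2[of f e g] by (simp add: mult.commute)

lemma O1_Bd: "Bd e \<Longrightarrow> O1 e f \<Longrightarrow> Bd f"
  unfolding Bd_def O1_def
proof (elim exE)
  fix C D assume "\<forall>\<^sub>F x in at_top. \<bar>e x\<bar> \<le> C" "\<forall>\<^sub>F x in at_top. \<bar>f x\<bar> \<le> D * e x"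
  then have "\<forall>\<^sub>F x in at_top. \<bar>f x\<bar> \<le> \<bar>D\<bar> * C"
  proof eventually_elim
    case (elim x)
    have "D * e x \<le> \<bar>D\<bar> * \<bar>e x\<bar>" by (metis abs_ge_self abs_mult)
    also have "\<dots> \<le> \<bar>D\<bar> * C" using elim by (intro mult_left_mono) auto
    finally show ?case using elim by linarith
  qed
  then show "\<exists>C. \<forall>\<^sub>F x in at_top. \<bar>f x\<bar> \<le> C" by blast
qed

lemma O1_self: "\<forall>\<^sub>F x in at_top. e x \<ge> 0 \<Longrightarrow> O1 e (\<lambda>x. c * e x)"
  unfolding O1_def
proof (rule exI[of _ "\<bar>c\<bar>"])
  assume "\<forall>\<^sub>F x in at_top. e x \<ge> 0"
  then show "\<forall>\<^sub>F x in at_top. \<bar>c * e x\<bar> \<le> \<bar>c\<bar> * e x"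
    by eventually_elim (simp add: abs_mult)
qed

lemma O1_cong: "O1 e f \<Longrightarrow> \<forall>\<^sub>F x in at_top. f x = g x \<Longrightarrow> O1 e g"
  unfolding O1_def
proof (elim exE)
  fix C assume "\<forall>\<^sub>F x in at_top. \<bar>f x\<bar> \<le> C * e x" "\<forall>\<^sub>F x in at_top. f x = g x"
  then have "\<forall>\<^sub>F x in at_top. \<bar>g x\<bar> \<le> C * e x" by eventually_elim auto
  then show "\<exists>C. \<forall>\<^sub>F x in at_top. \<bar>g x\<bar> \<le> C * e x" by blast
qed

lemma O2_cong: "O2 e f \<Longrightarrow> \<forall>\<^sub>F x in at_top. f x = g x \<Longrightarrow> O2 e g"
  unfolding O2_def
proof (elim exE)
  fix C assume "\<forall>\<^sub>F x in at_top. \<bar>f x\<bar> \<le> C * (e x)\<^sup>2" "\<forall>\<^sub>F x in at_top. f x = g x"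
  then have "\<forall>\<^sub>F x in at_top. \<bar>g x\<bar> \<le> C * (e x)\<^sup>2" by eventually_elim auto
  then show "\<exists>C. \<forall>\<^sub>F x in at_top. \<bar>g x\<bar> \<le> C * (e x)\<^sup>2" by blast
qed

lemma Bd_cong: "Bd f \<Longrightarrow> \<forall>\<^sub>F x in at_top. f x = g x \<Longrightarrow> Bd g"
  unfolding Bd_def
proof (elim exE)
  fix C assume "\<forall>\<^sub>F x in at_top. \<bar>f x\<bar> \<le> C" "\<forall>\<^sub>F x in at_top. f x = g x"
  then have "\<forall>\<^sub>F x in at_top. \<bar>g x\<bar> \<le> C" by eventually_elim auto
  then show "\<exists>C. \<forall>\<^sub>F x in at_top. \<bar>g x\<bar> \<le> C" by blast
qed


lemma delta_ident:
  fixes R \<gamma> H0 H c0n Ib m :: real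
  assumes q0: "\<gamma> * H0\<^sup>2 + c0n * H0 = m * R"
    and q1: "\<gamma> * H\<^sup>2 + (c0n - Ib) * H = m * R"
  shows "(H - H0) * (\<gamma> * (H + H0) + c0n) = Ib * H"
proof -
  have "\<gamma> * H\<^sup>2 + (c0n - Ib) * H = \<gamma> * H0\<^sup>2 + c0n * H0" using q0 q1 by simp
  then show ?thesis by (simp add: algebra_simps power2_eq_square)
qed

lemma delta_diff:
  fixes \<gamma> H0 H c0n Ib Dd D0 :: real
  assumes qd: "(H - H0) * Dd = Ib * H"
    and Dd: "Dd = \<gamma> * (H + H0) + c0n" and D0: "D0 = c0n + 2 * \<gamma> * H0"
    and pos: "Dd > 0" "D0 > 0"
  shows "(H - H0) - Ib * H0 / D0 = Ib * (H - H0) * (c0n + \<gamma> * H0) * (1 / (Dd * D0))"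
proof -
  have d: "H - H0 = Ib * H / Dd" using qd pos by (simp add: eq_divide_eq)
  have k: "H * D0 - H0 * Dd = (H - H0) * (c0n + \<gamma> * H0)" unfolding Dd D0 by (simp add: algebra_simps)
  have "Ib * H / Dd - Ib * H0 / D0 = Ib * (H * D0 - H0 * Dd) / (Dd * D0)"
    using pos by (simp add: field_simps)
  then show ?thesis unfolding d[symmetric] k by simp
qed

lemma hb_diff:
  fixes R \<gamma> H0 H h0 hb ct I DR DR0 :: real
  assumes DR0: "DR0 = R + \<gamma> * H0\<^sup>2" and DR: "DR = R + \<gamma> * H\<^sup>2" and pos: "DR > 0"
    and f0: "h0 * DR0 = R * H0 - ct * H0\<^sup>2"
    and f1: "hb * DR = R * H - (ct - I) * H\<^sup>2"
  shows "hb - h0 = ((H - H0) * (R - (ct + \<gamma> * h0) * (H + H0)) + I * H\<^sup>2) / DR"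
proof -
  have "(hb - h0) * DR = hb * DR - h0 * DR0 - h0 * \<gamma> * (H\<^sup>2 - H0\<^sup>2)"
    unfolding DR DR0 by (simp add: algebra_simps)
  also have "\<dots> = (H - H0) * (R - (ct + \<gamma> * h0) * (H + H0)) + I * H\<^sup>2"
    unfolding f0 f1 by (simp add: algebra_simps power2_eq_square)
  finally show ?thesis using pos by (simp add: eq_divide_eq)
qed

lemma am_ident:
  fixes R \<gamma> H0 h0 ct D0 DR0 am :: real
  assumes DR0: "DR0 = R + \<gamma> * H0\<^sup>2" and pos: "DR0 > 0" "D0 > 0" "h0 \<noteq> 0"
    and f0: "h0 * DR0 = R * H0 - ct * H0\<^sup>2"
    and am: "am = h0 / D0 * (1 - H0\<^sup>2 / DR0 * ((ct + 2 * \<gamma> * h0) / h0))"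
  shows "am = H0 * (R - 2 * (ct + \<gamma> * h0) * H0) / (D0 * DR0)"
    and "am = R * (2 * h0 - H0) / (D0 * DR0)"
    and "am = (h0 * DR0 - H0\<^sup>2 * (ct + 2 * \<gamma> * h0)) / (D0 * DR0)"
proof -
  show am0: "am = (h0 * DR0 - H0\<^sup>2 * (ct + 2 * \<gamma> * h0)) / (D0 * DR0)"
    unfolding am using pos by (simp add: field_simps)
  have e1: "h0 * DR0 - H0\<^sup>2 * (ct + 2 * \<gamma> * h0) = H0 * (R - 2 * (ct + \<gamma> * h0) * H0)"
    using f0 unfolding DR0 by (simp add: algebra_simps power2_eq_square)
  have e2: "h0 * DR0 - H0\<^sup>2 * (ct + 2 * \<gamma> * h0) = R * (2 * h0 - H0)"
    using f0 unfolding DR0 by (simp add: algebra_simps power2_eq_square)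
  show "am = H0 * (R - 2 * (ct + \<gamma> * h0) * H0) / (D0 * DR0)" using am0 e1 by simp
  show "am = R * (2 * h0 - H0) / (D0 * DR0)" using am0 e2 by simp
qed

lemma lin_ident:
  fixes R \<gamma> H0 h0 ct D0 DR0 am ai I Ib :: real
  assumes pos: "DR0 > 0" "D0 > 0"
    and am: "am = H0 * (R - 2 * (ct + \<gamma> * h0) * H0) / (D0 * DR0)"
    and ai: "ai = H0\<^sup>2 / DR0 + am"
  shows "ai * I + am * (Ib - I) = ((Ib * H0 / D0) * (R - 2 * (ct + \<gamma> * h0) * H0) + I * H0\<^sup>2) / DR0"
  unfolding ai am using pos by (simp add: field_simps)

lemma r1_split:
  fixes a b NN N0 DR DR0 :: real
  assumes "a = NN / DR" "b = N0 / DR0" "DR > 0" "DR0 > 0"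
  shows "a - b = (NN - N0) * (1 / DR) + N0 * (DR0 - DR) * (1 / (DR * DR0))"
  using assms by (simp add: field_simps)

lemma r2_split:
  fixes hb h0 H H0 L d0 :: real
  assumes "H > 0" "H0 > 0"
  shows "hb / H - h0 / H0 - (L * H0 - h0 * d0) / H0\<^sup>2
       = (hb - h0 - L) * (1 / H) - h0 * ((H - H0) - d0) * (1 / (H * H0))
         - (L * H0 - h0 * d0) * (H - H0) * (1 / (H * H0\<^sup>2))"
  using assms by (simp add: field_simps power2_eq_square)

lemma q_ident:
  fixes R \<gamma> H0 h0 ct D0 DR0 am ai I Ib :: real
  assumes pos: "DR0 > 0" "D0 > 0" "H0 > 0"
    and am: "am = (h0 * DR0 - H0\<^sup>2 * (ct + 2 * \<gamma> * h0)) / (D0 * DR0)"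
    and ai: "ai = H0\<^sup>2 / DR0 + am"
  shows "H0 / DR0 * ((1 - (ct + 2 * \<gamma> * h0) / D0) * I - (ct + 2 * \<gamma> * h0) / D0 * (Ib - I))
       = ((ai * I + am * (Ib - I)) * H0 - h0 * (Ib * H0 / D0)) / H0\<^sup>2"
  unfolding ai am using pos
  by (simp add: divide_simps) (simp add: algebra_simps power2_eq_square)


lemma active_facts:
  assumes NE: "NEc N R \<gamma> c h" and R: "R > 0" and g: "\<gamma> \<ge> 0" and N: "N \<ge> 1"
    and cpos: "\<forall>i\<in>{1..N}. c i > 0"
    and act: "{i\<in>{1..N}. h i > 0} = {1..n}"
  shows "1 \<le> n" "n \<le> N" "totH N h = (\<Sum>i=1..n. h i)" "totH N h > 0"
    "\<forall>i\<in>{1..n}. h i > 0 \<and> h i \<le> totH N h \<and> h i * (R + \<gamma> * (totH N h)\<^sup>2) = R * totH N h - c i * (totH N h)\<^sup>2"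
    "\<gamma> * (totH N h)\<^sup>2 + (\<Sum>i=1..n. c i) * totH N h = (real n - 1) * R"
proof -
  have nn: "\<forall>j\<in>{1..N}. 0 \<le> h j" using NE unfolding NEc_def by auto
  show Hp: "totH N h > 0" using NE_form(1)[OF NE R g N cpos] .
  have sub: "{1..n} \<subseteq> {1..N}" using act by blast
  have tot: "totH N h = (\<Sum>i=1..n. h i)"
    unfolding totH_def
  proof (rule sum.mono_neutral_right)
    show "finite {1..N}" by simp
    show "{1..n} \<subseteq> {1..N}" using sub .
    show "\<forall>i\<in>{1..N} - {1..n}. h i = 0"
    proof
      fix i assume i: "i \<in> {1..N} - {1..n}"
      then have "\<not> h i > 0" using act by blast
      moreover have "0 \<le> h i" using nn i by blast
      ultimately show "h i = 0" by linarith
    qed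
  qed
  show "totH N h = (\<Sum>i=1..n. h i)" using tot .
  show n1: "1 \<le> n"
  proof (rule ccontr)
    assume "\<not> 1 \<le> n"
    then have "n = 0" by simp
    then show False using tot Hp by simp
  qed
  show "n \<le> N" using sub n1 by auto
  have hpos: "\<forall>i\<in>{1..n}. h i > 0" using act by blast
  have foc: "\<forall>i\<in>{1..n}. h i * (R + \<gamma> * (totH N h)\<^sup>2) = R * totH N h - c i * (totH N h)\<^sup>2"
    using NE_nec(2)[OF NE R g cpos] hpos sub by blast
  have le: "\<forall>i\<in>{1..n}. h i \<le> totH N h"
  proof
    fix i assume i: "i \<in> {1..n}"
    have "h i \<le> (\<Sum>j=1..n. h j)"
    proof (rule member_le_sum)
      show "i \<in> {1..n}" using i .
      show "finite {1..n}" by simp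
      fix x assume "x \<in> {1..n} - {i}"
      then have "x \<in> {1..n}" by blast
      then show "0 \<le> h x" using hpos by (meson less_imp_le)
    qed
    then show "h i \<le> totH N h" using tot by simp
  qed
  show "\<forall>i\<in>{1..n}. h i > 0 \<and> h i \<le> totH N h \<and> h i * (R + \<gamma> * (totH N h)\<^sup>2) = R * totH N h - c i * (totH N h)\<^sup>2"
    using hpos le foc by blast
  define H where "H = totH N h"
  have "(\<Sum>i=1..n. h i * (R + \<gamma> * H\<^sup>2)) = (\<Sum>i=1..n. R * H - c i * H\<^sup>2)"
    using foc unfolding H_def by (intro sum.cong) auto
  moreover have "(\<Sum>i=1..n. h i * (R + \<gamma> * H\<^sup>2)) = H * (R + \<gamma> * H\<^sup>2)"
    using tot unfolding H_def[symmetric] by (simp add: sum_distrib_right[symmetric])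
  moreover have "(\<Sum>i=1..n. R * H - c i * H\<^sup>2) = real n * R * H - (\<Sum>i=1..n. c i) * H\<^sup>2"
  proof -
    have "(\<Sum>i=1..n. R * H - c i * H\<^sup>2) = (\<Sum>i=1..n. R * H) - (\<Sum>i=1..n. c i * H\<^sup>2)"
      by (rule sum_subtractf)
    also have "(\<Sum>i=1..n. c i * H\<^sup>2) = (\<Sum>i=1..n. c i) * H\<^sup>2"
      by (rule sum_distrib_right[symmetric])
    finally show ?thesis by simp
  qed
  ultimately have "H * (R + \<gamma> * H\<^sup>2) = real n * R * H - (\<Sum>i=1..n. c i) * H\<^sup>2"
    by simp
  then have "H * (\<gamma> * H\<^sup>2 + (\<Sum>i=1..n. c i) * H) = H * ((real n - 1) * R)"
    by (simp add: algebra_simps power2_eq_square)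
  then show "\<gamma> * (totH N h)\<^sup>2 + (\<Sum>i=1..n. c i) * totH N h = (real n - 1) * R"
    using Hp unfolding H_def by simp
qed

lemma static_signs:
  fixes R \<gamma> H0 h0 ct c0n D0 DR0 am ai :: real
  assumes R: "R > 0" and g: "\<gamma> \<ge> 0" and H0: "H0 > 0" and h0: "h0 > 0" "h0 \<le> H0"
    and ct: "ct > 0" "ct < c0n"
    and D0: "D0 = c0n + 2 * \<gamma> * H0" and DR0: "DR0 = R + \<gamma> * H0\<^sup>2"
    and f0: "h0 * DR0 = R * H0 - ct * H0\<^sup>2"
    and am: "am = h0 / D0 * (1 - H0\<^sup>2 / DR0 * ((ct + 2 * \<gamma> * h0) / h0))"
    and ai: "ai = H0\<^sup>2 / DR0 + am"
  shows "ai > 0" "am < 0 \<longleftrightarrow> h0 / H0 < 1 / 2" "H0 / DR0 > 0"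
    "0 < (ct + 2 * \<gamma> * h0) / D0" "(ct + 2 * \<gamma> * h0) / D0 < 1"
proof -
  have gH: "\<gamma> * H0 \<ge> 0" "\<gamma> * h0 \<ge> 0" "\<gamma> * H0\<^sup>2 \<ge> 0" using g H0 h0 by auto
  have DR0p: "DR0 > 0" unfolding DR0 using R gH by linarith
  have D0p: "D0 > 0" unfolding D0 using ct gH by linarith
  have am2: "am = R * (2 * h0 - H0) / (D0 * DR0)"
    using am_ident(2)[OF DR0 DR0p D0p _ f0 am] h0 by simp
  have DD: "D0 * DR0 > 0" using D0p DR0p by simp
  show "am < 0 \<longleftrightarrow> h0 / H0 < 1 / 2"
  proof -
    have "am < 0 \<longleftrightarrow> R * (2 * h0 - H0) < 0" unfolding am2 using DD by (simp add: divide_less_0_iff)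
    also have "\<dots> \<longleftrightarrow> 2 * h0 < H0" using R by (simp add: mult_less_0_iff)
    also have "\<dots> \<longleftrightarrow> h0 / H0 < 1 / 2" using H0 by (simp add: field_simps)
    finally show ?thesis .
  qed
  have num: "H0\<^sup>2 * D0 + R * (2 * h0 - H0) = H0\<^sup>2 * (c0n - ct) + \<gamma> * H0\<^sup>2 * (2 * H0 - h0) + R * h0"
    using f0 unfolding D0 DR0 by (simp add: algebra_simps power2_eq_square)
  have "H0\<^sup>2 * (c0n - ct) > 0" using H0 ct by simp
  moreover have "\<gamma> * H0\<^sup>2 * (2 * H0 - h0) \<ge> 0" using gH h0 by simp
  moreover have "R * h0 > 0" using R h0 by simp
  ultimately have "H0\<^sup>2 * D0 + R * (2 * h0 - H0) > 0" unfolding num by linarith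
  moreover have "ai = (H0\<^sup>2 * D0 + R * (2 * h0 - H0)) / (D0 * DR0)"
    unfolding ai am2 using D0p DR0p by (simp add: field_simps)
  ultimately show "ai > 0" using DD by simp
  show "H0 / DR0 > 0" using H0 DR0p by simp
  show "0 < (ct + 2 * \<gamma> * h0) / D0" using ct gH D0p by simp
  have "ct + 2 * \<gamma> * h0 < D0"
  proof -
    have "\<gamma> * h0 \<le> \<gamma> * H0" using g h0 by (simp add: mult_left_mono)
    then show ?thesis unfolding D0 using ct by linarith
  qed
  then show "(ct + 2 * \<gamma> * h0) / D0 < 1" using D0p by simp
qed

lemma Q_mono:
  fixes \<eta> cti ctj ct0 \<gamma> hi hj D0 K0 :: real
  assumes "\<eta> > 0" "cti < ctj" "\<gamma> \<ge> 0" "hj \<le> hi" "0 \<le> K0" "K0 < D0"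
  shows "(cti - ct0) / (2 * \<eta>) - (cti + 2 * \<gamma> * hi) / D0 * (K0 / (2 * \<eta>))
       < (ctj - ct0) / (2 * \<eta>) - (ctj + 2 * \<gamma> * hj) / D0 * (K0 / (2 * \<eta>))"
proof -
  have D0: "D0 > 0" using assms by linarith
  have "(ctj - cti) * (D0 - K0) > 0" using assms by simp
  moreover have "2 * \<gamma> * (hi - hj) * K0 \<ge> 0" using assms by simp
  ultimately have key: "(cti - ct0) * D0 - (cti + 2 * \<gamma> * hi) * K0 < (ctj - ct0) * D0 - (ctj + 2 * \<gamma> * hj) * K0"
    by (simp add: algebra_simps)
  have e: "\<And>c h. (c - ct0) / (2 * \<eta>) - (c + 2 * \<gamma> * h) / D0 * (K0 / (2 * \<eta>))
      = ((c - ct0) * D0 - (c + 2 * \<gamma> * h) * K0) / (2 * \<eta> * D0)"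
    using D0 assms(1) by (simp add: field_simps)
  show ?thesis unfolding e using key D0 assms(1) by (intro divide_strict_right_mono) auto
qed


lemma ct_mono:
  assumes "\<forall>i. 1 \<le> i \<and> i < N \<longrightarrow> ct i \<le> ct (Suc i)"
  shows "1 \<le> i \<Longrightarrow> i \<le> N \<Longrightarrow> (ct 1 :: real) \<le> ct i"
proof (induction i)
  case 0 then show ?case by simp
next
  case (Suc k)
  show ?case
  proof (cases "k = 0")
    case True then show ?thesis by simp
  next
    case False
    then have "ct 1 \<le> ct k" using Suc by simp
    moreover have "ct k \<le> ct (Suc k)" using assms Suc.prems False by simp
    ultimately show ?thesis by simp
  qed
qed

lemma O1_id: "\<forall>\<^sub>F x in at_top. e x \<ge> 0 \<Longrightarrow> O1 e e"
  using O1_self[of e 1] by simp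

theorem proposition5p3:
  fixes ct :: "nat \<Rightarrow> real" and R \<gamma> K :: real and N n :: nat
  assumes "N \<ge> 2"
    and "0 < ct 1"
    and "\<forall>i. 1 \<le> i \<and> i < N \<longrightarrow> ct i \<le> ct (Suc i)"
    and "0 < ct 0" and "ct 0 \<le> ct 1"
    and "R > 0" and "\<gamma> \<ge> 0" and "K > 0"
    and "\<forall>\<^sub>F \<eta> in at_top. active ct \<eta> R \<gamma> K N (beta_star \<eta> n) = {1..n}
                          \<and> active ct \<eta> R \<gamma> K N (\<lambda>_. 0) = {1..n}"
  shows
   "let h0 = hstar ct 1 R \<gamma> K N (\<lambda>_. 0);
        H0 = totH N h0;
        c0n = (\<Sum>j=1..n. ct j);
        I = (\<lambda>\<eta> i. Ired ct \<eta> n i);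
        Ibar = (\<lambda>\<eta>. \<Sum>j=1..n. I \<eta> j);
        Ibarm = (\<lambda>\<eta> i. Ibar \<eta> - I \<eta> i);
        am = (\<lambda>i. h0 i / (c0n + 2 * \<gamma> * H0) *
                 (1 - H0\<^sup>2 / (R + \<gamma> * H0\<^sup>2) * ((ct i + 2 * \<gamma> * h0 i) / h0 i)));
        ai = (\<lambda>i. H0\<^sup>2 / (R + \<gamma> * H0\<^sup>2) + am i);
        \<alpha>0 = H0 / (R + \<gamma> * H0\<^sup>2);
        \<alpha> = (\<lambda>i. (ct i + 2 * \<gamma> * h0 i) / (c0n + 2 * \<gamma> * H0));
        hb = (\<lambda>\<eta>. hstar ct \<eta> R \<gamma> K N (beta_star \<eta> n));
        Hb = (\<lambda>\<eta>. totH N (hb \<eta>));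
        Q = (\<lambda>\<eta> i. (1 - \<alpha> i) * I \<eta> i - \<alpha> i * Ibarm \<eta> i)
    in (\<forall>i\<in>{1..n}. \<exists>C. \<forall>\<^sub>F \<eta> in at_top.
           \<bar>hb \<eta> i - h0 i - ai i * I \<eta> i - am i * Ibarm \<eta> i\<bar> \<le> C * (Ibar \<eta>)\<^sup>2)
     \<and> (\<forall>i\<in>{1..n}. ai i > 0 \<and> (am i < 0 \<longleftrightarrow> h0 i / H0 < 1 / 2))
     \<and> (\<forall>i\<in>{1..n}. \<exists>C. \<forall>\<^sub>F \<eta> in at_top.
           \<bar>hb \<eta> i / Hb \<eta> - h0 i / H0 - \<alpha>0 * Q \<eta> i\<bar> \<le> C * (Ibar \<eta>)\<^sup>2)
     \<and> \<alpha>0 > 0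
     \<and> (\<forall>i\<in>{1..n}. 0 < \<alpha> i \<and> \<alpha> i < 1)
     \<and> (\<forall>i\<in>{1..n}. \<forall>j\<in>{1..n}. ct i < ct j \<longrightarrow> (\<forall>\<^sub>F \<eta> in at_top. Q \<eta> i < Q \<eta> j))"
proof -
  note hyp = assms(9)
  have R: "R > 0" and g: "\<gamma> \<ge> 0" using assms by auto
  have N1: "N \<ge> 1" using assms(1) by simp
  have ct1: "\<forall>i\<in>{1..N}. ct 1 \<le> ct i" using ct_mono[OF assms(3)] by auto
  have ctpos: "\<forall>i\<in>{1..N}. ct i > 0" using ct1 assms(2) by force
  have ct0le: "\<forall>i\<in>{1..N}. ct 0 \<le> ct i" using ct1 assms(5) by force
  define g0 where "g0 = (THE h. NEc N R \<gamma> ct h)"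
  have g0NE: "NEc N R \<gamma> ct g0" unfolding g0_def by (rule NE_ex1[OF assms(1) R g ctpos])
  have cost0: "\<And>\<eta>. (\<lambda>i. cost ct \<eta> i 0) = ct" by (rule ext) (simp add: cost_def)
  have hs0: "\<And>\<eta> A. eqm ct \<eta> R \<gamma> K N A (\<lambda>_. 0) = g0"
  proof -
    fix \<eta> A
    have "is_NE ct \<eta> R \<gamma> K N A (\<lambda>_. 0) = NEc N R \<gamma> ct"
      using isNE_eq[of N A "\<lambda>_. 0" ct \<eta> R \<gamma> K] cost0 by (intro ext) simp
    then show "eqm ct \<eta> R \<gamma> K N A (\<lambda>_. 0) = g0" unfolding eqm_def g0_def by simp
  qed
  have Az: "\<And>\<eta>. Azero ct \<eta> R \<gamma> K N = {i\<in>{1..N}. g0 i > 0}" unfolding Azero_def hs0 ..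
  have act0: "\<And>\<eta>. active ct \<eta> R \<gamma> K N (\<lambda>_. 0) = {i\<in>{1..N}. g0 i > 0}"
    unfolding active_def hstar_def hs0 ..
  have A0: "{i\<in>{1..N}. g0 i > 0} = {1..n}"
  proof -
    obtain X where "\<forall>\<eta>\<ge>X. active ct \<eta> R \<gamma> K N (beta_star \<eta> n) = {1..n}
                          \<and> active ct \<eta> R \<gamma> K N (\<lambda>_. 0) = {1..n}"
      using hyp unfolding eventually_at_top_linorder by blast
    then show ?thesis using act0[of X] by auto
  qed
  define h0 where "h0 = hstar ct 1 R \<gamma> K N (\<lambda>_. 0)"
  have h0g0: "h0 = g0" unfolding h0_def hstar_def hs0 ..
  define H0 where "H0 = totH N h0"
  define c0n where "c0n = (\<Sum>j=1..n. ct j)"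
  note F0 = active_facts[OF g0NE R g N1 ctpos A0, folded h0g0, folded H0_def c0n_def]
  have n1: "1 \<le> n" and nN: "n \<le> N" and H0p: "H0 > 0" using F0 by auto
  have f0: "\<forall>i\<in>{1..n}. h0 i > 0 \<and> h0 i \<le> H0 \<and> h0 i * (R + \<gamma> * H0\<^sup>2) = R * H0 - ct i * H0\<^sup>2"
    using F0(5) .
  have q0: "\<gamma> * H0\<^sup>2 + c0n * H0 = (real n - 1) * R" using F0(6) .
  have sub: "{1..n} \<subseteq> {1..N}" using nN by auto
  have c0np: "c0n > 0" unfolding c0n_def using ctpos sub n1 by (intro sum_pos) auto
  have n2: "n \<ge> 2"
  proof -
    have "\<gamma> * H0\<^sup>2 \<ge> 0" using g by simp
    moreover have "c0n * H0 > 0" using c0np H0p by simp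
    ultimately have "(real n - 1) * R > 0" using q0 by linarith
    then have "real n - 1 > 0" using R by (simp add: zero_less_mult_iff)
    then show ?thesis by linarith
  qed
  have ctlt: "\<forall>i\<in>{1..n}. ct i < c0n"
  proof
    fix i assume i: "i \<in> {1..n}"
    have "c0n = ct i + sum ct ({1..n} - {i})" unfolding c0n_def using i by (rule_tac sum.remove) auto
    moreover have "sum ct ({1..n} - {i}) > 0"
    proof (rule sum_pos)
      show "finite ({1..n} - {i})" by simp
      have "{1..n} - {i} \<noteq> {}"
      proof
        assume "{1..n} - {i} = {}"
        then have "{1..n} \<subseteq> {i}" by blast
        moreover have "1 \<in> {1..n}" "2 \<in> {1..n}" using n2 by auto
        ultimately have "1 = i" "2 = i" by blast+
        then show False by simp
      qed
      then show "{1..n} - {i} \<noteq> {}" .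
      fix j assume "j \<in> {1..n} - {i}"
      then show "0 < ct j" using ctpos sub by auto
    qed
    ultimately show "ct i < c0n" by simp
  qed
  define I where "I = (\<lambda>\<eta> i. Ired ct \<eta> n i)"
  define Ib where "Ib = (\<lambda>\<eta>. \<Sum>j=1..n. I \<eta> j)"
  define hb where "hb = (\<lambda>\<eta>. hstar ct \<eta> R \<gamma> K N (beta_star \<eta> n))"
  define H where "H = (\<lambda>\<eta>. totH N (hb \<eta>))"
  define cE where "cE = (\<lambda>\<eta> i. cost ct \<eta> i (beta_star \<eta> n i))"
  define K0 where "K0 = c0n - real n * ct 0"
  have cE_eq: "\<And>\<eta> i. cE \<eta> i = ct i - I \<eta> i" unfolding cE_def I_def Ired_def by (simp add: cost_def)
  have cond: "\<And>\<eta>. \<forall>i\<in>{1..N}. \<not> (i \<notin> {1..n} \<and> beta_star \<eta> n i > 0)"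
    by (auto simp: beta_star_def)
  have hb_eq: "\<And>\<eta>. hb \<eta> = (THE h. NEc N R \<gamma> (cE \<eta>) h)"
  proof -
    fix \<eta>
    have "is_NE ct \<eta> R \<gamma> K N {1..n} (beta_star \<eta> n) = NEc N R \<gamma> (cE \<eta>)"
      using isNE_eq[OF cond[of \<eta>], of ct \<eta> R \<gamma> K] unfolding cE_def by (intro ext) simp
    then show "hb \<eta> = (THE h. NEc N R \<gamma> (cE \<eta>) h)"
      unfolding hb_def hstar_def eqm_def Az A0 by simp
  qed
  have Ival: "I \<eta> i = (ct i - ct 0) / (2 * \<eta>)" if "\<eta> \<ge> 1" "i \<in> {1..n}" for \<eta> i
  proof -
    have m: "min (1 / \<eta>) 1 = 1 / \<eta>" using that by simp
    show ?thesis unfolding I_def Ired_def beta_star_def using that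
      by (simp add: m cost_def field_simps power2_eq_square)
  qed
  have Iout: "I \<eta> i = 0" if "i \<notin> {1..n}" for \<eta> i
  proof -
    have "beta_star \<eta> n i = 0" using that by (auto simp: beta_star_def)
    then show ?thesis unfolding I_def Ired_def by simp
  qed
  have Inn: "0 \<le> I \<eta> i" if "\<eta> \<ge> 1" for \<eta> i
  proof (cases "i \<in> {1..n}")
    case True
    then show ?thesis using Ival[OF that True] ct0le sub that by auto
  qed (simp add: Iout)
  have Ile: "I \<eta> i \<le> (ct i - ct 0) / 2" if "\<eta> \<ge> 1" "i \<in> {1..n}" for \<eta> i
  proof -
    have "ct i - ct 0 \<ge> 0" using ct0le sub that by auto
    then have "(ct i - ct 0) / (2 * \<eta>) \<le> (ct i - ct 0) / 2" using that
      by (intro divide_left_mono) auto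
    then show ?thesis using Ival[OF that] by simp
  qed
  have cEpos: "\<forall>i\<in>{1..N}. cE \<eta> i > 0" if "\<eta> \<ge> 1" for \<eta>
  proof
    fix i assume i: "i \<in> {1..N}"
    show "cE \<eta> i > 0"
    proof (cases "i \<in> {1..n}")
      case True
      have "ct i > 0" using ctpos i by blast
      then have "ct i - (ct i - ct 0) / 2 > 0" using assms(4) by simp
      then show ?thesis unfolding cE_eq using Ile[OF that True] by linarith
    next
      case False
      then show ?thesis unfolding cE_eq using Iout ctpos i by simp
    qed
  qed
  have hbNE: "NEc N R \<gamma> (cE \<eta>) (hb \<eta>)" if "\<eta> \<ge> 1" for \<eta>
    unfolding hb_eq by (rule NE_ex1[OF assms(1) R g cEpos[OF that]])
  have K0nn: "K0 \<ge> 0"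
  proof -
    have "(\<Sum>j=1..n. ct j - ct 0) \<ge> 0" using ct0le sub by (intro sum_nonneg) auto
    then show ?thesis unfolding K0_def c0n_def by (simp add: sum_subtractf)
  qed
  have Ibval: "Ib \<eta> = K0 / (2 * \<eta>)" if "\<eta> \<ge> 1" for \<eta>
  proof -
    have "Ib \<eta> = (\<Sum>j=1..n. (ct j - ct 0) / (2 * \<eta>))" unfolding Ib_def using Ival[OF that] by simp
    also have "\<dots> = (\<Sum>j=1..n. ct j - ct 0) / (2 * \<eta>)" by (simp add: sum_divide_distrib)
    also have "\<dots> = K0 / (2 * \<eta>)" unfolding K0_def c0n_def by (simp add: sum_subtractf)
    finally show ?thesis .
  qed
  have IleIb: "I \<eta> i \<le> Ib \<eta>" if "\<eta> \<ge> 1" "i \<in> {1..n}" for \<eta> i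
    unfolding Ib_def using that Inn by (intro member_le_sum) auto
  have sumcE: "(\<Sum>i=1..n. cE \<eta> i) = c0n - Ib \<eta>" for \<eta>
    unfolding cE_eq Ib_def c0n_def by (simp add: sum_subtractf)
  have EV: "\<forall>\<^sub>F \<eta> in at_top. \<eta> \<ge> max 1 (K0 / c0n) \<and> {i\<in>{1..N}. hb \<eta> i > 0} = {1..n}"
    using hyp eventually_ge_at_top[of "max 1 (K0 / c0n)"]
    by eventually_elim (auto simp: active_def hb_def)
  have PF: "\<forall>\<^sub>F \<eta> in at_top. \<eta> \<ge> 1 \<and> 0 \<le> Ib \<eta> \<and> Ib \<eta> \<le> c0n / 2 \<and> H \<eta> > 0 \<and>
      (\<forall>i\<in>{1..n}. hb \<eta> i * (R + \<gamma> * (H \<eta>)\<^sup>2) = R * H \<eta> - (ct i - I \<eta> i) * (H \<eta>)\<^sup>2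
                   \<and> 0 \<le> I \<eta> i \<and> I \<eta> i \<le> Ib \<eta>) \<and>
      \<gamma> * (H \<eta>)\<^sup>2 + (c0n - Ib \<eta>) * H \<eta> = (real n - 1) * R"
    using EV
  proof eventually_elim
    case (elim \<eta>)
    then have e1: "\<eta> \<ge> 1" and eK: "\<eta> \<ge> K0 / c0n" and act: "{i\<in>{1..N}. hb \<eta> i > 0} = {1..n}" by auto
    note AF = active_facts[OF hbNE[OF e1] R g N1 cEpos[OF e1] act, folded H_def]
    have Ib0: "0 \<le> Ib \<eta>" unfolding Ibval[OF e1] using K0nn e1 by simp
    have "K0 \<le> c0n * \<eta>" using eK c0np by (simp add: field_simps)
    then have Ib2: "Ib \<eta> \<le> c0n / 2" unfolding Ibval[OF e1] using e1 by (simp add: field_simps)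
    have sI: "(\<Sum>i=1..n. ct i - I \<eta> i) = c0n - Ib \<eta>" using sumcE[of \<eta>] unfolding cE_eq .
    show ?case using AF(4) AF(5) AF(6) Ib0 Ib2 e1 Inn[OF e1] IleIb[OF e1] unfolding sI cE_eq H_def
      by auto
  qed
  define D0 where "D0 = c0n + 2 * \<gamma> * H0"
  define DR0 where "DR0 = R + \<gamma> * H0\<^sup>2"
  define am where "am = (\<lambda>i. h0 i / (c0n + 2 * \<gamma> * H0) *
                 (1 - H0\<^sup>2 / (R + \<gamma> * H0\<^sup>2) * ((ct i + 2 * \<gamma> * h0 i) / h0 i)))"
  define ai where "ai = (\<lambda>i. H0\<^sup>2 / (R + \<gamma> * H0\<^sup>2) + am i)"
  define \<alpha>0 where "\<alpha>0 = H0 / (R + \<gamma> * H0\<^sup>2)"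
  define \<alpha> where "\<alpha> = (\<lambda>i. (ct i + 2 * \<gamma> * h0 i) / (c0n + 2 * \<gamma> * H0))"
  define Q where "Q = (\<lambda>\<eta> i. (1 - \<alpha> i) * I \<eta> i - \<alpha> i * (Ib \<eta> - I \<eta> i))"
  have gH0: "\<gamma> * H0 \<ge> 0" "\<gamma> * H0\<^sup>2 \<ge> 0" using g H0p by auto
  have D0p: "D0 > 0" unfolding D0_def using c0np gH0 by linarith
  have DR0p: "DR0 > 0" unfolding DR0_def using R gH0 by linarith
  have ST: "ai i > 0 \<and> (am i < 0 \<longleftrightarrow> h0 i / H0 < 1 / 2) \<and> 0 < \<alpha> i \<and> \<alpha> i < 1" if i: "i \<in> {1..n}" for i
  proof -
    have hp: "h0 i > 0" "h0 i \<le> H0" and fi: "h0 i * (R + \<gamma> * H0\<^sup>2) = R * H0 - ct i * H0\<^sup>2"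
      using f0 i by auto
    have cp: "ct i > 0" using ctpos sub i by auto
    note S = static_signs[OF R g H0p hp cp ctlt[rule_format, OF i] refl refl fi refl refl]
    show ?thesis using S unfolding ai_def am_def \<alpha>_def by auto
  qed
  have a0p: "\<alpha>0 > 0" unfolding \<alpha>0_def using H0p DR0p DR0_def by simp
  have Qform: "Q \<eta> i = I \<eta> i - \<alpha> i * Ib \<eta>" for \<eta> i unfolding Q_def by (simp add: algebra_simps)
  have MONO: "\<forall>\<^sub>F \<eta> in at_top. Q \<eta> i < Q \<eta> j"
    if i: "i \<in> {1..n}" and j: "j \<in> {1..n}" and lt: "ct i < ct j" for i j
  proof -
    have fi: "h0 i * DR0 = R * H0 - ct i * H0\<^sup>2" and fj: "h0 j * DR0 = R * H0 - ct j * H0\<^sup>2"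
      using f0 i j unfolding DR0_def by auto
    have "(h0 i - h0 j) * DR0 = (ct j - ct i) * H0\<^sup>2" using fi fj by (simp add: algebra_simps)
    moreover have "(ct j - ct i) * H0\<^sup>2 > 0" using lt H0p by simp
    ultimately have "(h0 i - h0 j) * DR0 > 0" by simp
    then have hij: "h0 j \<le> h0 i" using DR0p by (simp add: zero_less_mult_iff)
    have K0D0: "K0 < D0"
    proof -
      have "real n * ct 0 > 0" using n1 assms(4) by simp
      then show ?thesis unfolding K0_def D0_def using gH0 by linarith
    qed
    show ?thesis using eventually_ge_at_top[of "1::real"]
    proof eventually_elim
      case (elim \<eta>)
      have e: "Q \<eta> k = (ct k - ct 0) / (2 * \<eta>) - (ct k + 2 * \<gamma> * h0 k) / D0 * (K0 / (2 * \<eta>))"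
        if "k \<in> {1..n}" for k
        unfolding Qform Ival[OF elim that] Ibval[OF elim] \<alpha>_def D0_def by simp
      show ?case unfolding e[OF i] e[OF j]
        by (rule Q_mono) (use elim lt g hij K0nn K0D0 in auto)
    qed
  qed
  define \<delta> where "\<delta> = (\<lambda>\<eta>. H \<eta> - H0)"
  define \<delta>0 where "\<delta>0 = (\<lambda>\<eta>. Ib \<eta> * H0 / D0)"
  define Dd where "Dd = (\<lambda>\<eta>. \<gamma> * (H \<eta> + H0) + c0n)"
  define DR where "DR = (\<lambda>\<eta>. R + \<gamma> * (H \<eta>)\<^sup>2)"
  have DF: "\<forall>\<^sub>F \<eta> in at_top. \<delta> \<eta> * Dd \<eta> = Ib \<eta> * H \<eta> \<and> 0 \<le> \<delta> \<eta> \<and> \<delta> \<eta> \<le> (2 * H0 / c0n) * Ib \<eta>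
      \<and> H \<eta> \<le> 2 * H0 \<and> H0 \<le> H \<eta> \<and> c0n \<le> Dd \<eta> \<and> R \<le> DR \<eta>"
    using PF
  proof eventually_elim
    case (elim \<eta>)
    have Ib0: "0 \<le> Ib \<eta>" and Ib2: "Ib \<eta> \<le> c0n / 2" and Hp: "H \<eta> > 0"
      and q1: "\<gamma> * (H \<eta>)\<^sup>2 + (c0n - Ib \<eta>) * H \<eta> = (real n - 1) * R" using elim by auto
    have qd: "\<delta> \<eta> * Dd \<eta> = Ib \<eta> * H \<eta>" unfolding \<delta>_def Dd_def by (rule delta_ident[OF q0 q1])
    have gHH: "\<gamma> * (H \<eta> + H0) \<ge> 0" using g Hp H0p by simp
    have Ddc: "c0n \<le> Dd \<eta>" unfolding Dd_def using gHH by simp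
    have Ddp: "Dd \<eta> > 0" using Ddc c0np by simp
    have "\<delta> \<eta> * Dd \<eta> \<ge> 0" unfolding qd using Ib0 Hp by simp
    then have d0: "\<delta> \<eta> \<ge> 0" using Ddp by (simp add: zero_le_mult_iff)
    have "\<delta> \<eta> * c0n \<le> \<delta> \<eta> * Dd \<eta>" using d0 Ddc by (simp add: mult_left_mono)
    also have "\<dots> = Ib \<eta> * H0 + Ib \<eta> * \<delta> \<eta>"
    proof -
      have "Ib \<eta> * H \<eta> = Ib \<eta> * H0 + Ib \<eta> * \<delta> \<eta>" unfolding \<delta>_def by (simp add: algebra_simps)
      then show ?thesis using qd by simp
    qed
    also have "Ib \<eta> * \<delta> \<eta> \<le> c0n / 2 * \<delta> \<eta>" using Ib2 d0 by (rule mult_right_mono)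
    finally have "\<delta> \<eta> * c0n \<le> Ib \<eta> * H0 + c0n / 2 * \<delta> \<eta>" by simp
    then have "\<delta> \<eta> * c0n \<le> 2 * (Ib \<eta> * H0)" by (simp add: algebra_simps)
    then have dle: "\<delta> \<eta> \<le> (2 * H0 / c0n) * Ib \<eta>" using c0np by (simp add: field_simps)
    have "(2 * H0 / c0n) * Ib \<eta> \<le> (2 * H0 / c0n) * (c0n / 2)" using Ib2 H0p c0np
      by (intro mult_left_mono) auto
    also have "\<dots> = H0" using c0np by simp
    finally have "\<delta> \<eta> \<le> H0" using dle by linarith
    then have "H \<eta> \<le> 2 * H0" unfolding \<delta>_def by simp
    moreover have "H0 \<le> H \<eta>" using d0 unfolding \<delta>_def by simp
    moreover have "R \<le> DR \<eta>" unfolding DR_def using g by simp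
    ultimately show ?case using qd d0 dle Ddc by blast
  qed
  have evIb: "\<forall>\<^sub>F \<eta> in at_top. Ib \<eta> \<ge> 0" using PF by eventually_elim auto
  have oIb: "O1 Ib Ib" by (rule O1_id[OF evIb])
  have od: "O1 Ib \<delta>" unfolding O1_def
    by (rule exI[of _ "2 * H0 / c0n"]) (use DF in \<open>eventually_elim, auto\<close>)
  have od0: "O1 Ib \<delta>0"
    by (rule O1_cong[OF O1_self[OF evIb, of "H0 / D0"]]) (simp add: \<delta>0_def)
  have bH: "Bd H" unfolding Bd_def
    by (rule exI[of _ "2 * H0"]) (use DF in \<open>eventually_elim, auto\<close>)
  have bHH: "Bd (\<lambda>\<eta>. H \<eta> + H0)" by (rule Bd_add[OF bH Bd_const])
  have biDR: "Bd (\<lambda>\<eta>. 1 / DR \<eta>)" by (rule Bd_inv[OF R]) (use DF in \<open>eventually_elim, auto\<close>)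
  have biDd: "Bd (\<lambda>\<eta>. 1 / (Dd \<eta> * D0))"
  proof (rule Bd_inv)
    show "c0n * D0 > 0" using c0np D0p by simp
    show "\<forall>\<^sub>F \<eta> in at_top. c0n * D0 \<le> Dd \<eta> * D0" using DF
      by eventually_elim (use D0p in \<open>auto intro: mult_right_mono\<close>)
  qed
  have biH: "Bd (\<lambda>\<eta>. 1 / H \<eta>)" by (rule Bd_inv[OF H0p]) (use DF in \<open>eventually_elim, auto\<close>)
  have biHH0: "Bd (\<lambda>\<eta>. 1 / (H \<eta> * H0))"
  proof (rule Bd_inv)
    show "H0 * H0 > 0" using H0p by simp
    show "\<forall>\<^sub>F \<eta> in at_top. H0 * H0 \<le> H \<eta> * H0" using DF
      by eventually_elim (use H0p in \<open>auto intro: mult_right_mono\<close>)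
  qed
  have biHH02: "Bd (\<lambda>\<eta>. 1 / (H \<eta> * H0\<^sup>2))"
  proof (rule Bd_inv)
    show "H0 * H0\<^sup>2 > 0" using H0p by simp
    show "\<forall>\<^sub>F \<eta> in at_top. H0 * H0\<^sup>2 \<le> H \<eta> * H0\<^sup>2" using DF
      by eventually_elim (use H0p in \<open>auto intro: mult_right_mono\<close>)
  qed
  have biDRDR0: "Bd (\<lambda>\<eta>. 1 / (DR \<eta> * DR0))"
  proof (rule Bd_inv)
    show "R * DR0 > 0" using R DR0p by simp
    show "\<forall>\<^sub>F \<eta> in at_top. R * DR0 \<le> DR \<eta> * DR0" using DF
      by eventually_elim (use DR0p in \<open>auto intro: mult_right_mono\<close>)
  qed
  have odd: "O2 Ib (\<lambda>\<eta>. \<delta> \<eta> - \<delta>0 \<eta>)"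
  proof (rule O2_cong)
    show "O2 Ib (\<lambda>\<eta>. Ib \<eta> * \<delta> \<eta> * (c0n + \<gamma> * H0) * (1 / (Dd \<eta> * D0)))"
      by (rule O2B[OF O2B[OF O11[OF oIb od] Bd_const] biDd])
    show "\<forall>\<^sub>F \<eta> in at_top. Ib \<eta> * \<delta> \<eta> * (c0n + \<gamma> * H0) * (1 / (Dd \<eta> * D0)) = \<delta> \<eta> - \<delta>0 \<eta>"
      using DF
    proof eventually_elim
      case (elim \<eta>)
      have Ddp: "Dd \<eta> > 0" using elim c0np by linarith
      have "(H \<eta> - H0) * Dd \<eta> = Ib \<eta> * H \<eta>" using elim unfolding \<delta>_def by simp
      from delta_diff[OF this Dd_def[THEN fun_cong] D0_def Ddp D0p]
      show ?case unfolding \<delta>_def \<delta>0_def by (simp add: algebra_simps)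
    qed
  qed
  have R12: "O2 Ib (\<lambda>\<eta>. hb \<eta> i - h0 i - ai i * I \<eta> i - am i * (Ib \<eta> - I \<eta> i))
           \<and> O2 Ib (\<lambda>\<eta>. hb \<eta> i / H \<eta> - h0 i / H0 - \<alpha>0 * Q \<eta> i)" if i: "i \<in> {1..n}" for i
  proof -
    have h0p: "h0 i > 0" and fi: "h0 i * DR0 = R * H0 - ct i * H0\<^sup>2"
      using f0 i unfolding DR0_def by auto
    have amD: "am i = h0 i / D0 * (1 - H0\<^sup>2 / DR0 * ((ct i + 2 * \<gamma> * h0 i) / h0 i))"
      unfolding am_def D0_def DR0_def ..
    have aiD: "ai i = H0\<^sup>2 / DR0 + am i" unfolding ai_def DR0_def ..
    have am1: "am i = H0 * (R - 2 * (ct i + \<gamma> * h0 i) * H0) / (D0 * DR0)"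
      by (rule am_ident(1)[OF DR0_def DR0p D0p _ fi amD]) (use h0p in simp)
    have am3: "am i = (h0 i * DR0 - H0\<^sup>2 * (ct i + 2 * \<gamma> * h0 i)) / (D0 * DR0)"
      by (rule am_ident(3)[OF DR0_def DR0p D0p _ fi amD]) (use h0p in simp)
    define PP where "PP = (\<lambda>\<eta>. R - (ct i + \<gamma> * h0 i) * (H \<eta> + H0))"
    define P0 where "P0 = R - 2 * (ct i + \<gamma> * h0 i) * H0"
    define NN where "NN = (\<lambda>\<eta>. \<delta> \<eta> * PP \<eta> + I \<eta> i * (H \<eta>)\<^sup>2)"
    define N0 where "N0 = (\<lambda>\<eta>. \<delta>0 \<eta> * P0 + I \<eta> i * H0\<^sup>2)"
    define Lin where "Lin = (\<lambda>\<eta>. ai i * I \<eta> i + am i * (Ib \<eta> - I \<eta> i))"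
    have oI: "O1 Ib (\<lambda>\<eta>. I \<eta> i)" unfolding O1_def
      by (rule exI[of _ 1]) (use PF in \<open>eventually_elim, use i in auto\<close>)
    have bPP: "Bd PP" unfolding PP_def by (rule Bd_diff[OF Bd_const Bd_mult[OF Bd_const bHH]])
    have oPPd: "O1 Ib (\<lambda>\<eta>. PP \<eta> - P0)"
      by (rule O1_cong[OF BO1[OF Bd_const od, of "- (ct i + \<gamma> * h0 i)"]])
         (simp add: PP_def P0_def \<delta>_def algebra_simps)
    have oHsq: "O1 Ib (\<lambda>\<eta>. (H \<eta>)\<^sup>2 - H0\<^sup>2)"
      by (rule O1_cong[OF O1B[OF od bHH]]) (simp add: \<delta>_def algebra_simps power2_eq_square)
    have oNd: "O2 Ib (\<lambda>\<eta>. NN \<eta> - N0 \<eta>)"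
      by (rule O2_cong[OF O2_add[OF O2_add[OF O2B[OF odd bPP] O11[OF od0 oPPd]] O11[OF oI oHsq]]])
         (simp add: NN_def N0_def \<delta>_def algebra_simps)
    have oN0: "O1 Ib N0" unfolding N0_def by (rule O1_add[OF O1B[OF od0 Bd_const] O1B[OF oI Bd_const]])
    have oDRd: "O1 Ib (\<lambda>\<eta>. DR0 - DR \<eta>)"
      by (rule O1_cong[OF BO1[OF Bd_const oHsq, of "- \<gamma>"]]) (simp add: DR_def DR0_def algebra_simps)
    have r1e: "O2 Ib (\<lambda>\<eta>. (NN \<eta> - N0 \<eta>) * (1 / DR \<eta>) + N0 \<eta> * (DR0 - DR \<eta>) * (1 / (DR \<eta> * DR0)))"
      by (rule O2_add[OF O2B[OF oNd biDR] O2B[OF O11[OF oN0 oDRd] biDRDR0]])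
    have r1: "O2 Ib (\<lambda>\<eta>. hb \<eta> i - h0 i - ai i * I \<eta> i - am i * (Ib \<eta> - I \<eta> i))"
    proof (rule O2_cong[OF r1e])
      show "\<forall>\<^sub>F \<eta> in at_top. (NN \<eta> - N0 \<eta>) * (1 / DR \<eta>) + N0 \<eta> * (DR0 - DR \<eta>) * (1 / (DR \<eta> * DR0))
          = hb \<eta> i - h0 i - ai i * I \<eta> i - am i * (Ib \<eta> - I \<eta> i)"
        using PF DF
      proof eventually_elim
        case (elim \<eta>)
        have DRp: "DR \<eta> > 0" using elim R by linarith
        have f1: "hb \<eta> i * DR \<eta> = R * H \<eta> - (ct i - I \<eta> i) * (H \<eta>)\<^sup>2"
          using elim i unfolding DR_def by auto
        have a: "hb \<eta> i - h0 i = NN \<eta> / DR \<eta>"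
          unfolding NN_def PP_def \<delta>_def by (rule hb_diff[OF DR0_def DR_def[THEN fun_cong] DRp fi f1])
        have b: "ai i * I \<eta> i + am i * (Ib \<eta> - I \<eta> i) = N0 \<eta> / DR0"
          unfolding N0_def \<delta>0_def P0_def by (rule lin_ident[OF DR0p D0p am1 aiD])
        have "(hb \<eta> i - h0 i) - (ai i * I \<eta> i + am i * (Ib \<eta> - I \<eta> i))
            = (NN \<eta> - N0 \<eta>) * (1 / DR \<eta>) + N0 \<eta> * (DR0 - DR \<eta>) * (1 / (DR \<eta> * DR0))"
          by (rule r1_split[OF a b DRp DR0p])
        then show ?case by (simp add: algebra_simps)
      qed
    qed
    have oLin: "O1 Ib Lin" unfolding Lin_def
      by (rule O1_add[OF BO1[OF Bd_const oI] BO1[OF Bd_const O1_diff[OF oIb oI]]])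
    have oLd: "O1 Ib (\<lambda>\<eta>. Lin \<eta> * H0 - h0 i * \<delta>0 \<eta>)"
      by (rule O1_diff[OF O1B[OF oLin Bd_const] BO1[OF Bd_const od0]])
    have r2e: "O2 Ib (\<lambda>\<eta>. (hb \<eta> i - h0 i - Lin \<eta>) * (1 / H \<eta>) - h0 i * (\<delta> \<eta> - \<delta>0 \<eta>) * (1 / (H \<eta> * H0))
         - (Lin \<eta> * H0 - h0 i * \<delta>0 \<eta>) * \<delta> \<eta> * (1 / (H \<eta> * H0\<^sup>2)))"
    proof (rule O2_diff[OF O2_diff[OF O2B[OF _ biH] O2B[OF BO2[OF Bd_const odd] biHH0]] O2B[OF O11[OF oLd od] biHH02]])
      show "O2 Ib (\<lambda>\<eta>. hb \<eta> i - h0 i - Lin \<eta>)"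
        by (rule O2_cong[OF r1]) (simp add: Lin_def algebra_simps)
    qed
    have r2: "O2 Ib (\<lambda>\<eta>. hb \<eta> i / H \<eta> - h0 i / H0 - \<alpha>0 * Q \<eta> i)"
    proof (rule O2_cong[OF r2e])
      show "\<forall>\<^sub>F \<eta> in at_top. (hb \<eta> i - h0 i - Lin \<eta>) * (1 / H \<eta>) - h0 i * (\<delta> \<eta> - \<delta>0 \<eta>) * (1 / (H \<eta> * H0))
         - (Lin \<eta> * H0 - h0 i * \<delta>0 \<eta>) * \<delta> \<eta> * (1 / (H \<eta> * H0\<^sup>2))
         = hb \<eta> i / H \<eta> - h0 i / H0 - \<alpha>0 * Q \<eta> i"
        using PF DF
      proof eventually_elim
        case (elim \<eta>)
        have Hp: "H \<eta> > 0" using elim by auto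
        have q: "\<alpha>0 * Q \<eta> i = (Lin \<eta> * H0 - h0 i * \<delta>0 \<eta>) / H0\<^sup>2"
          unfolding \<alpha>0_def Q_def \<alpha>_def Lin_def \<delta>0_def DR0_def[symmetric] D0_def[symmetric]
          by (rule q_ident[OF DR0p D0p H0p am3 aiD])
        show ?case unfolding q \<delta>_def
          using r2_split[OF Hp H0p, of "hb \<eta> i" "h0 i" "Lin \<eta>" "\<delta>0 \<eta>"] by simp
      qed
    qed
    show ?thesis using r1 r2 by blast
  qed
  have C1: "\<forall>i\<in>{1..n}. \<exists>C. \<forall>\<^sub>F \<eta> in at_top.
           \<bar>hb \<eta> i - h0 i - ai i * I \<eta> i - am i * (Ib \<eta> - I \<eta> i)\<bar> \<le> C * (Ib \<eta>)\<^sup>2"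
    using R12 unfolding O2_def by blast
  have C3: "\<forall>i\<in>{1..n}. \<exists>C. \<forall>\<^sub>F \<eta> in at_top.
           \<bar>hb \<eta> i / H \<eta> - h0 i / H0 - \<alpha>0 * Q \<eta> i\<bar> \<le> C * (Ib \<eta>)\<^sup>2"
    using R12 unfolding O2_def by blast
  have C2: "\<forall>i\<in>{1..n}. ai i > 0 \<and> (am i < 0 \<longleftrightarrow> h0 i / H0 < 1 / 2)" using ST by blast
  have C5: "\<forall>i\<in>{1..n}. 0 < \<alpha> i \<and> \<alpha> i < 1" using ST by blast
  have C6: "\<forall>i\<in>{1..n}. \<forall>j\<in>{1..n}. ct i < ct j \<longrightarrow> (\<forall>\<^sub>F \<eta> in at_top. Q \<eta> i < Q \<eta> j)"
    using MONO by blast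
  have all: "(\<forall>i\<in>{1..n}. \<exists>C. \<forall>\<^sub>F \<eta> in at_top.
           \<bar>hb \<eta> i - h0 i - ai i * I \<eta> i - am i * (Ib \<eta> - I \<eta> i)\<bar> \<le> C * (Ib \<eta>)\<^sup>2)
     \<and> (\<forall>i\<in>{1..n}. ai i > 0 \<and> (am i < 0 \<longleftrightarrow> h0 i / H0 < 1 / 2))
     \<and> (\<forall>i\<in>{1..n}. \<exists>C. \<forall>\<^sub>F \<eta> in at_top.
           \<bar>hb \<eta> i / H \<eta> - h0 i / H0 - \<alpha>0 * Q \<eta> i\<bar> \<le> C * (Ib \<eta>)\<^sup>2)
     \<and> \<alpha>0 > 0
     \<and> (\<forall>i\<in>{1..n}. 0 < \<alpha> i \<and> \<alpha> i < 1)
     \<and> (\<forall>i\<in>{1..n}. \<forall>j\<in>{1..n}. ct i < ct j \<longrightarrow> (\<forall>\<^sub>F \<eta> in at_top. Q \<eta> i < Q \<eta> j))"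
    using C1 C2 C3 a0p C5 C6 by blast
  show ?thesis
    unfolding Let_def
    using all unfolding Q_def \<alpha>_def \<alpha>0_def ai_def am_def H_def hb_def Ib_def I_def c0n_def H0_def h0_def .
qed


end
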